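(* Let $G=(V,E)$ be a finite rectangle in $\mathbb Z^2$ with no additional edges ($E_A=\emptyset$), and let $x\in\mathbb C^E$. Then \[ \|\Lambda(x)\|\le(\sqrt2+1)\,\|x\|_\infty\quad\text{and}\quad |f_r(x)|\le 2|V|\,r^{-1}(\sqrt2+1)^r\|x\|_\infty^r\ \text{ for all } r\ge1, \] where $\|\cdot\|$ is the operator norm induced by the Euclidean norm and $\|x\|_\infty=\max_e|x_e|$.
   Context: A finite rectangle in $\mathbb Z^2$ is the graph whose vertex set consists of all points of $\mathbb Z^2$ in a rectangle $[a,b]\times[c,d]$ and whose edges join vertices at $L^1$-distance $1$, with its standard embedding. Loops in $G$: a path $(v_0,\dots,v_{n-1})$ has consecutive vertices adjacent and $v_{i+2}\ne v_i$; closed if all rotations are paths; a loop is a closed path lexicographically smallest among rotations of itself and its reversal. $m(\ell)$ = number of steps / smallest period; winding angle $\alpha(\ell)$ = sum over $i$ (mod $n$) of turning angles in $(-\pi,\pi)$ from $v_{i+1}-v_i$ to $v_{i+2}-v_{i+1}$; $\operatorname{sgn}(\ell)=-e^{i\alpha(\ell)/2}$; $w(\ell;x)=\frac{\operatorname{sgn}(\ell)}{m(\ell)}\prod_i x_{v_iv_{i+1}}$. With no additional edges the length of a loop is its number of steps, and $f_r(x)=\sum_{\ell \text{ of } r \text{ steps}}w(\ell;x)$. $\Lambda(x)$ is the matrix indexed by directed edges of $G$ with $\Lambda_{\vec{uv},\vec{vz}}(x)=x_{uv}e^{i\angle(v-u,z-v)/2}$ when $z\neq u$ ($\angle$ the turning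 angle in $(-\pi,\pi)$), and all other entries $0$. *)

theory Defs
  imports "HOL-Analysis.Analysis"
begin

type_synonym vert = "int \<times> int"

definition rectV :: "int \<Rightarrow> int \<Rightarrow> int \<Rightarrow> int \<Rightarrow> vert set" where
  "rectV a b c d = {(i, j). a \<le> i \<and> i \<le> b \<and> c \<le> j \<and> j \<le> d}"

definition radj :: "int \<Rightarrow> int \<Rightarrow> int \<Rightarrow> int \<Rightarrow> vert \<Rightarrow> vert \<Rightarrow> bool" where
  "radj a b c d u v \<longleftrightarrow> u \<in> rectV a b c d \<and> v \<in> rectV a b c d \<and>
     \<bar>fst u - fst v\<bar> + \<bar>snd u - snd v\<bar> = 1"

text \<open>Undirected edges are represented as two-element vertex sets {u,v};
  edge weights x are functions on such sets, x_{uv} = x {u,v}.\<close>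
definition rectE :: "int \<Rightarrow> int \<Rightarrow> int \<Rightarrow> int \<Rightarrow> vert set set" where
  "rectE a b c d = {{u, v} | u v. radj a b c d u v}"

definition rectD :: "int \<Rightarrow> int \<Rightarrow> int \<Rightarrow> int \<Rightarrow> (vert \<times> vert) set" where
  "rectD a b c d = {(u, v). radj a b c d u v}"

definition supnorm :: "vert set set \<Rightarrow> (vert set \<Rightarrow> complex) \<Rightarrow> real" where
  "supnorm E x = Max (insert 0 ((\<lambda>e. cmod (x e)) ` E))"

text \<open>Planar vector of a lattice point as a complex number, and the turning angle
  in (-pi, pi] from p to q (it lies in (-pi,pi) whenever q is not a negative multiple of p).\<close>
definition cpt :: "vert \<Rightarrow> complex" where
  "cpt p = Complex (of_int (fst p)) (of_int (snd p))"

definition turn :: "vert \<Rightarrow> vert \<Rightarrow> real" where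
  "turn p q = Arg (cpt q / cpt p)"

definition vdiff :: "vert \<Rightarrow> vert \<Rightarrow> vert" where
  "vdiff v u = (fst v - fst u, snd v - snd u)"

definition Lam :: "int \<Rightarrow> int \<Rightarrow> int \<Rightarrow> int \<Rightarrow> (vert set \<Rightarrow> complex)
    \<Rightarrow> vert \<times> vert \<Rightarrow> vert \<times> vert \<Rightarrow> complex" where
  "Lam a b c d x e f =
     (if e \<in> rectD a b c d \<and> f \<in> rectD a b c d \<and> snd e = fst f \<and> snd f \<noteq> fst e
      then x {fst e, snd e} *
           exp (\<i> * of_real (turn (vdiff (snd e) (fst e)) (vdiff (snd f) (fst f)) / 2))
      else 0)"

definition opnorm :: "('i \<Rightarrow> 'i \<Rightarrow> complex) \<Rightarrow> 'i set \<Rightarrow> real" where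
  "opnorm M D = Sup {L2_set (\<lambda>e. cmod (\<Sum>f\<in>D. M e f * v f)) D | v.
                      L2_set (\<lambda>e. cmod (v e)) D \<le> 1}"

definition closed_path :: "int \<Rightarrow> int \<Rightarrow> int \<Rightarrow> int \<Rightarrow> vert list \<Rightarrow> bool" where
  "closed_path a b c d vs \<longleftrightarrow> vs \<noteq> [] \<and>
     (\<forall>i < length vs. radj a b c d (vs ! i) (vs ! ((i + 1) mod length vs)) \<and>
                      vs ! ((i + 2) mod length vs) \<noteq> vs ! i)"

definition vless :: "vert rel" where
  "vless = {(p, q). fst p < fst q \<or> (fst p = fst q \<and> snd p < snd q)}"

definition is_loop :: "int \<Rightarrow> int \<Rightarrow> int \<Rightarrow> int \<Rightarrow> vert list \<Rightarrow> bool" where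
  "is_loop a b c d vs \<longleftrightarrow> closed_path a b c d vs \<and>
     (\<forall>k < length vs. \<forall>ws \<in> {rotate k vs, rotate k (rev vs)}.
        vs = ws \<or> (vs, ws) \<in> lexord vless)"

definition loops :: "int \<Rightarrow> int \<Rightarrow> int \<Rightarrow> int \<Rightarrow> nat \<Rightarrow> vert list set" where
  "loops a b c d r = {vs. is_loop a b c d vs \<and> length vs = r}"

definition mult :: "vert list \<Rightarrow> nat" where
  "mult vs = length vs div (LEAST p. 0 < p \<and> rotate p vs = vs)"

definition winding :: "vert list \<Rightarrow> real" where
  "winding vs = (let n = length vs in
     \<Sum>i<n. turn (vdiff (vs ! ((i + 1) mod n)) (vs ! i))
                (vdiff (vs ! ((i + 2) mod n)) (vs ! ((i + 1) mod n))))"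

definition lsgn :: "vert list \<Rightarrow> complex" where
  "lsgn vs = - exp (\<i> * of_real (winding vs / 2))"

definition lweight :: "vert list \<Rightarrow> (vert set \<Rightarrow> complex) \<Rightarrow> complex" where
  "lweight vs x = lsgn vs / of_nat (mult vs) *
     (\<Prod>i<length vs. x {vs ! i, vs ! ((i + 1) mod length vs)})"

definition f_r :: "int \<Rightarrow> int \<Rightarrow> int \<Rightarrow> int \<Rightarrow> nat \<Rightarrow> (vert set \<Rightarrow> complex) \<Rightarrow> complex" where
  "f_r a b c d r x = (\<Sum>vs\<in>loops a b c d r. lweight vs x)"

end

theory Submission
  imports Defs
begin

lemma expit: "exp (\<i> * complex_of_real t) = Complex (cos t) (sin t)"
  by (metis cis.ctr cis_conv_exp)

lemma Arg_ii': "Arg \<i> = pi/2"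
  by (rule Arg_unique[of 1], subst expit) (simp_all add: complex_eq_iff)

lemma Arg_mii': "Arg (-\<i>) = -pi/2"
proof -
  have "-(pi/2) \<le> pi" using pi_gt_zero by linarith
  then show ?thesis by (intro Arg_unique[of 1], subst expit) (simp_all add: complex_eq_iff)
qed

definition ca :: complex where "ca = Complex (sqrt 2 / 2) (sqrt 2 / 2)"

lemma exp_pi4: "exp (\<i> * of_real (pi/4)) = ca"
  by (subst expit) (simp add: ca_def cos_45 sin_45)
lemma exp_mpi4: "exp (- (\<i> * of_real (pi/4))) = cnj ca"
  using expit[of "-pi/4"] by (simp add: ca_def cos_45 sin_45 complex_eq_iff)

definition dirv :: "nat \<Rightarrow> vert" where
  "dirv k = (if k = 0 then (1,0) else if k = 1 then (0,1) else if k = 2 then (-1,0) else (0,-1))"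

definition cc :: "nat \<Rightarrow> nat \<Rightarrow> complex" where
  "cc d d' = (if d' = d then 1 else if d' = (d+1) mod 4 then ca else if d' = (d+3) mod 4 then cnj ca else 0)"

lemma cpt_dirv: "cpt (dirv 0) = 1" "cpt (dirv 1) = \<i>" "cpt (dirv (Suc 0)) = \<i>" "cpt (dirv 2) = -1" "cpt (dirv 3) = -\<i>"
  by (simp_all add: cpt_def dirv_def complex_eq_iff)

lemma turn_val:
  assumes "d < 4" "d' < 4" "d' \<noteq> (d+2) mod 4"
  shows "turn (dirv d) (dirv d') = (if d' = d then 0 else if d' = (d+1) mod 4 then pi/2 else -pi/2)"
proof -
  have "d \<in> {0,1,2,3}" "d' \<in> {0,1,2,3}" using assms by auto
  then show ?thesis using assms
    by (elim insertE emptyE; simp add: turn_def cpt_dirv Arg_ii' Arg_mii' divide_complex_def)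
qed

lemma turn_cc:
  assumes "d < 4" "d' < 4" "d' \<noteq> (d+2) mod 4"
  shows "exp (\<i> * of_real (turn (dirv d) (dirv d') / 2)) = cc d d'"
proof -
  have "d \<in> {0,1,2,3}" "d' \<in> {0,1,2,3}" using assms by auto
  moreover have "pi/2/2 = pi/4" "-pi/2/2 = -pi/4" by simp_all
  ultimately show ?thesis using assms
    by (elim insertE emptyE; simp add: turn_val cc_def exp_pi4 exp_mpi4 del: of_real_divide)
qed


lemma sum4: "(\<Sum>d<4. f d) = f 0 + f 1 + f 2 + (f (3::nat) :: 'a::comm_monoid_add)"
  by (simp add: eval_nat_numeral add.assoc)

lemma ca_facts: "ca * cnj ca = 1" "ca * ca = \<i>" "cnj ca * cnj ca = - \<i>"
  by (simp_all add: ca_def complex_eq_iff power_divide)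

lemma cc_identity:
  fixes y :: "nat \<Rightarrow> complex"
  defines "z \<equiv> \<lambda>d. (\<Sum>k<4. cc d k * y k)"
  shows "(\<Sum>d<4. z d * cnj (z d)) = (\<Sum>d<4. y d * cnj (y d)) + (\<Sum>d<4. cnj (y d) * z d + y d * cnj (z d))"
proof -
  have ca: "ca * cnj ca = 1" "ca * ca = \<i>" "cnj ca * cnj ca = - \<i>" by (rule ca_facts)+
  show ?thesis
    unfolding z_def sum4 by (simp add: cc_def, use ca in algebra)
qed


lemma quad_bound:
  fixes t n :: real
  assumes "0 \<le> n" "t\<^sup>2 \<le> n\<^sup>2 + 2 * n * t"
  shows "t \<le> (1 + sqrt 2) * n"
proof -
  have "(t - n)\<^sup>2 \<le> (sqrt 2 * n)\<^sup>2"
    using assms(2) by (simp add: power_mult_distrib power2_diff algebra_simps)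
  then have "t - n \<le> sqrt 2 * n"
    by (rule power2_le_imp_le) (use assms(1) in simp)
  then show ?thesis by (simp add: algebra_simps)
qed

lemma cc_norm:
  fixes y :: "nat \<Rightarrow> complex"
  shows "(\<Sum>d<4. (cmod (\<Sum>k<4. cc d k * y k))\<^sup>2) \<le> (1 + sqrt 2)\<^sup>2 * (\<Sum>k<4. (cmod (y k))\<^sup>2)"
proof -
  define z where "z = (\<lambda>d. (\<Sum>k<4. cc d k * y k))"
  define T where "T = (\<Sum>d<4. (cmod (z d))\<^sup>2)"
  define N where "N = (\<Sum>d<4. (cmod (y d))\<^sup>2)"
  define P where "P = (\<Sum>d<4. Re (cnj (y d) * z d))"
  have id: "(\<Sum>d<4. z d * cnj (z d)) = (\<Sum>d<4. y d * cnj (y d)) + (\<Sum>d<4. cnj (y d) * z d + y d * cnj (z d))"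
    unfolding z_def by (rule cc_identity)
  have sq: "\<And>w::complex. Re (w * cnj w) = (cmod w)\<^sup>2"
    by (metis Re_complex_of_real complex_norm_square)
  have re2: "\<And>u w::complex. Re (cnj u * w) + Re (u * cnj w) = 2 * Re (cnj u * w)"
    by simp
  have TNP: "T = N + 2 * P"
    using arg_cong[OF id, of Re]
    by (simp only: Re_sum sq plus_complex.sel re2 T_def N_def P_def sum_distrib_left)
  have "P \<le> (\<Sum>d<4. \<bar>cmod (y d)\<bar> * \<bar>cmod (z d)\<bar>)"
    unfolding P_def
    by (rule sum_mono) (metis abs_norm_cancel complex_Re_le_cmod complex_mod_cnj norm_mult)
  also have "\<dots> \<le> L2_set (\<lambda>d. cmod (y d)) {..<4} * L2_set (\<lambda>d. cmod (z d)) {..<4}"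
    by (rule L2_set_mult_ineq)
  also have "\<dots> = sqrt N * sqrt T"
    by (simp add: L2_set_def N_def T_def)
  finally have "P \<le> sqrt N * sqrt T" .
  have T0: "0 \<le> T" "0 \<le> N" unfolding T_def N_def by (auto intro: sum_nonneg)
  have "(sqrt T)\<^sup>2 \<le> (sqrt N)\<^sup>2 + 2 * sqrt N * sqrt T"
    using TNP \<open>P \<le> sqrt N * sqrt T\<close> T0 by simp
  then have "sqrt T \<le> (1 + sqrt 2) * sqrt N" by (rule quad_bound[rotated]) (simp add: T0)
  then have "(sqrt T)\<^sup>2 \<le> ((1 + sqrt 2) * sqrt N)\<^sup>2"
    by (rule power_mono) (simp add: T0)
  then show ?thesis using T0 unfolding T_def N_def z_def by (simp add: power_mult_distrib)
qed


definition addv :: "vert \<Rightarrow> vert \<Rightarrow> vert" where "addv w p = (fst w + fst p, snd w + snd p)"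
definition dirof :: "vert \<Rightarrow> nat" where
  "dirof p = (if p = (1,0) then 0 else if p = (0,1) then 1 else if p = (-1,0) then 2 else 3)"

lemma dirof_lt: "dirof p < 4" by (simp add: dirof_def)

lemma four_cases: "(k::nat) < 4 \<Longrightarrow> k = 0 \<or> k = 1 \<or> k = 2 \<or> k = 3" by auto

lemma unit_dir: "\<bar>fst p\<bar> + \<bar>snd p\<bar> = 1 \<Longrightarrow> dirv (dirof p) = p"
  by (cases p) (auto simp: dirof_def dirv_def abs_if split: if_splits)

lemma dirof_dirv: "k < 4 \<Longrightarrow> dirof (dirv k) = k"
  by (drule four_cases) (auto simp: dirof_def dirv_def)

lemma dirv_unit: "\<bar>fst (dirv k)\<bar> + \<bar>snd (dirv k)\<bar> = 1"
  by (simp add: dirv_def)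

lemma vdiff_addv[simp]: "vdiff (addv w p) w = p" by (simp add: vdiff_def addv_def)
lemma addv_vdiff[simp]: "addv u (vdiff w u) = w" by (simp add: vdiff_def addv_def)

lemma radj_unit: "radj a b c d u w \<Longrightarrow> \<bar>fst (vdiff w u)\<bar> + \<bar>snd (vdiff w u)\<bar> = 1"
  by (simp add: radj_def vdiff_def abs_minus_commute)

lemma radj_dirv: "radj a b c d u w \<Longrightarrow> dirv (dirof (vdiff w u)) = vdiff w u"
  by (rule unit_dir, rule radj_unit)

lemma radj_addv: "radj a b c d u w \<Longrightarrow> w = addv u (dirv (dirof (vdiff w u)))"
  by (simp add: radj_dirv)

lemma radj_addv_iff: "radj a b c d u (addv u (dirv k)) \<longleftrightarrow> u \<in> rectV a b c d \<and> addv u (dirv k) \<in> rectV a b c d"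
  by (simp add: radj_def addv_def dirv_def)

lemma radj_ne: "radj a b c d u w \<Longrightarrow> u \<noteq> w"
  by (auto simp: radj_def)

lemma addv_inj: "k < 4 \<Longrightarrow> k' < 4 \<Longrightarrow> addv w (dirv k) = addv w (dirv k') \<Longrightarrow> k = k'"
  by (metis dirof_dirv vdiff_addv)

lemma uturn: "j < 4 \<Longrightarrow> k < 4 \<Longrightarrow> addv (addv u (dirv j)) (dirv k) = u \<longleftrightarrow> k = (j+2) mod 4"
  apply (drule four_cases, drule four_cases)
  apply (cases u)
  apply (auto simp: addv_def dirv_def)
  done

lemma cc_uturn: "j < 4 \<Longrightarrow> cc j ((j+2) mod 4) = 0"
  by (drule four_cases) (auto simp: cc_def)

lemma finite_rectV: "finite (rectV a b c d)"
proof -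
  have "rectV a b c d \<subseteq> {a..b} \<times> {c..d}" by (auto simp: rectV_def)
  then show ?thesis by (rule finite_subset) simp
qed

lemma rectD_sub: "rectD a b c d \<subseteq> rectV a b c d \<times> rectV a b c d"
  by (auto simp: rectD_def radj_def)

lemma finite_rectD: "finite (rectD a b c d)"
  using finite_subset[OF rectD_sub] finite_rectV by blast

lemma rectE_img: "rectE a b c d = (\<lambda>(u,v). {u,v}) ` rectD a b c d"
  by (auto simp: rectE_def rectD_def)

lemma finite_rectE: "finite (rectE a b c d)"
  by (simp add: rectE_img finite_rectD)

lemma supnorm_ge: "finite E \<Longrightarrow> e \<in> E \<Longrightarrow> cmod (x e) \<le> supnorm E x"
  unfolding supnorm_def by (rule Max_ge) auto

lemma supnorm_nonneg: "finite E \<Longrightarrow> 0 \<le> supnorm E x"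
  unfolding supnorm_def by (rule Max_ge) auto

lemma edge_le_supnorm: "e \<in> rectD a b c d \<Longrightarrow> cmod (x {fst e, snd e}) \<le> supnorm (rectE a b c d) x"
  by (rule supnorm_ge[OF finite_rectE]) (force simp: rectE_img)

definition appL where
  "appL a b c d x v = (\<lambda>e. \<Sum>f\<in>rectD a b c d. Lam a b c d x e f * v f)"

definition Vw where
  "Vw a b c d v w k = (if (w, addv w (dirv k)) \<in> rectD a b c d then v (w, addv w (dirv k)) else 0)"

lemma app_form:
  assumes e: "e \<in> rectD a b c d"
  shows "appL a b c d x v e = x {fst e, snd e} *
     (\<Sum>k<4. cc (dirof (vdiff (snd e) (fst e))) k * Vw a b c d v (snd e) k)"
proof -
  obtain u w where uw: "e = (u, w)" by (cases e)
  have r: "radj a b c d u w" using e uw by (simp add: rectD_def)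
  define j where "j = dirof (vdiff w u)"
  have j4: "j < 4" by (simp add: j_def dirof_lt)
  have wj: "w = addv u (dirv j)" unfolding j_def by (rule radj_addv[OF r])
  define D where "D = rectD a b c d"
  define S where "S = {k. k < 4 \<and> (w, addv w (dirv k)) \<in> D}"
  have img: "{f\<in>D. fst f = w} = (\<lambda>k. (w, addv w (dirv k))) ` S"
  proof
    show "{f\<in>D. fst f = w} \<subseteq> (\<lambda>k. (w, addv w (dirv k))) ` S"
    proof
      fix f assume f: "f \<in> {f\<in>D. fst f = w}"
      then obtain z where fz: "f = (w, z)" by (cases f) auto
      have rz: "radj a b c d w z" using f fz by (simp add: D_def rectD_def)
      have "z = addv w (dirv (dirof (vdiff z w)))" by (rule radj_addv[OF rz])
      then show "f \<in> (\<lambda>k. (w, addv w (dirv k))) ` S"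
        using f fz dirof_lt unfolding S_def by (intro image_eqI[of _ _ "dirof (vdiff z w)"]) auto
    qed
  qed (auto simp: S_def)
  have inj: "inj_on (\<lambda>k. (w, addv w (dirv k))) S"
    by (rule inj_onI) (auto simp: S_def dest: addv_inj)
  have fin: "finite D" by (simp add: D_def finite_rectD)
  have "appL a b c d x v e = (\<Sum>f\<in>D. Lam a b c d x e f * v f)"
    by (simp add: appL_def D_def)
  also have "\<dots> = (\<Sum>f\<in>{f\<in>D. fst f = w}. Lam a b c d x e f * v f)"
    by (rule sum.mono_neutral_right) (use fin in \<open>auto simp: Lam_def uw D_def\<close>)
  also have "\<dots> = (\<Sum>k\<in>S. Lam a b c d x e (w, addv w (dirv k)) * v (w, addv w (dirv k)))"
    unfolding img by (subst sum.reindex[OF inj]) simp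
  also have "\<dots> = (\<Sum>k<4. x {u, w} * (cc j k * Vw a b c d v w k))"
  proof (rule sum.mono_neutral_cong_left)
    show "S \<subseteq> {..<4}" by (auto simp: S_def)
    show "\<forall>k\<in>{..<4} - S. x {u, w} * (cc j k * Vw a b c d v w k) = 0"
      by (auto simp: S_def Vw_def D_def)
    show "Lam a b c d x e (w, addv w (dirv k)) * v (w, addv w (dirv k)) =
          x {u, w} * (cc j k * Vw a b c d v w k)" if k: "k \<in> S" for k
    proof -
      have k4: "k < 4" and kD: "(w, addv w (dirv k)) \<in> D" using k by (auto simp: S_def)
      show ?thesis
      proof (cases "k = (j+2) mod 4")
        case True
        then have "addv w (dirv k) = u" using uturn[OF j4 k4, of u] wj by simp
        then show ?thesis using True cc_uturn[OF j4] by (simp add: Lam_def uw)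
      next
        case False
        then have ne: "addv w (dirv k) \<noteq> u" using uturn[OF j4 k4, of u] wj by simp
        have "vdiff w u = dirv j" using wj by simp
        then have "Lam a b c d x e (w, addv w (dirv k)) = x {u, w} * cc j k"
          using ne kD e turn_cc[OF j4 k4 False] by (simp add: Lam_def uw D_def)
        then show ?thesis using kD by (simp add: Vw_def D_def)
      qed
    qed
  qed (simp)
  finally show ?thesis by (simp add: uw j_def sum_distrib_left)
qed


lemma vdiff_inj: "vdiff w u1 = vdiff w u2 \<Longrightarrow> u1 = u2"
  by (cases u1, cases u2) (simp add: vdiff_def)

lemma app_norm_sq:
  fixes v :: "vert \<times> vert \<Rightarrow> complex" and a b c d :: int and x :: "vert set \<Rightarrow> complex"
  defines "D \<equiv> rectD a b c d" and "s \<equiv> supnorm (rectE a b c d) x"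
  shows "(\<Sum>e\<in>D. (cmod (appL a b c d x v e))\<^sup>2) \<le> ((1 + sqrt 2) * s)\<^sup>2 * (\<Sum>f\<in>D. (cmod (v f))\<^sup>2)"
proof -
  define V where "V = rectV a b c d"
  define dir where "dir = (\<lambda>e::vert\<times>vert. dirof (vdiff (snd e) (fst e)))"
  define Y where "Y = (\<lambda>w k. \<Sum>k'<4. cc k k' * Vw a b c d v w k')"
  define W where "W = (\<lambda>w k. Vw a b c d v w k)"
  have finD: "finite D" by (simp add: D_def finite_rectD)
  have finV: "finite V" by (simp add: V_def finite_rectV)
  have s0: "0 \<le> s" by (simp add: s_def supnorm_nonneg finite_rectE)
  have Dr: "\<And>e. e \<in> D \<Longrightarrow> radj a b c d (fst e) (snd e)" by (auto simp: D_def rectD_def)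
  have Dv: "\<And>e. e \<in> D \<Longrightarrow> fst e \<in> V \<and> snd e \<in> V" using Dr by (auto simp: radj_def V_def)
  define phi where "phi = (\<lambda>e::vert\<times>vert. (snd e, dir e))"
  define psi where "psi = (\<lambda>e::vert\<times>vert. (fst e, dir e))"
  have dirv_dir: "\<And>e. e \<in> D \<Longrightarrow> dirv (dir e) = vdiff (snd e) (fst e)"
    unfolding dir_def by (rule radj_dirv, erule Dr)
  have inj_phi: "inj_on phi D"
  proof (rule inj_onI)
    fix e1 e2 assume e: "e1 \<in> D" "e2 \<in> D" "phi e1 = phi e2"
    then have "snd e1 = snd e2" "vdiff (snd e1) (fst e1) = vdiff (snd e2) (fst e2)"
      using dirv_dir[OF e(1)] dirv_dir[OF e(2)] by (auto simp: phi_def)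
    then show "e1 = e2" using vdiff_inj by (metis prod.collapse)
  qed
  have inj_psi: "inj_on psi D"
  proof (rule inj_onI)
    fix e1 e2 assume e: "e1 \<in> D" "e2 \<in> D" "psi e1 = psi e2"
    then have "fst e1 = fst e2" "vdiff (snd e1) (fst e1) = vdiff (snd e2) (fst e2)"
      using dirv_dir[OF e(1)] dirv_dir[OF e(2)] by (auto simp: psi_def)
    then show "e1 = e2" by (metis addv_vdiff prod.collapse)
  qed
  have "(\<Sum>e\<in>D. (cmod (appL a b c d x v e))\<^sup>2) = (\<Sum>e\<in>D. (cmod (x {fst e, snd e}))\<^sup>2 * (cmod (Y (snd e) (dir e)))\<^sup>2)"
    by (rule sum.cong) (simp_all add: app_form D_def Y_def dir_def norm_mult power_mult_distrib)
  also have "\<dots> \<le> (\<Sum>e\<in>D. s\<^sup>2 * (cmod (Y (snd e) (dir e)))\<^sup>2)"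
  proof (rule sum_mono, rule mult_right_mono)
    fix e assume "e \<in> D"
    then have "cmod (x {fst e, snd e}) \<le> s" unfolding s_def D_def by (rule edge_le_supnorm)
    then show "(cmod (x {fst e, snd e}))\<^sup>2 \<le> s\<^sup>2" by (rule power_mono) simp
  qed simp
  also have "\<dots> = s\<^sup>2 * (\<Sum>p\<in>phi ` D. (cmod (Y (fst p) (snd p)))\<^sup>2)"
    by (simp only: sum_distrib_left sum.reindex[OF inj_phi]) (simp add: phi_def)
  also have "\<dots> \<le> s\<^sup>2 * (\<Sum>p\<in>V \<times> {..<4}. (cmod (Y (fst p) (snd p)))\<^sup>2)"
  proof (rule mult_left_mono, rule sum_mono2)
    show "phi ` D \<subseteq> V \<times> {..<4}" using Dv by (auto simp: phi_def dir_def dirof_lt)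
  qed (simp_all add: finV)
  also have "\<dots> = s\<^sup>2 * (\<Sum>w\<in>V. \<Sum>k<4. (cmod (Y w k))\<^sup>2)"
    by (simp add: sum.cartesian_product case_prod_unfold)
  also have "\<dots> \<le> s\<^sup>2 * (\<Sum>w\<in>V. (1 + sqrt 2)\<^sup>2 * (\<Sum>k<4. (cmod (W w k))\<^sup>2))"
    by (intro mult_left_mono sum_mono) (simp_all add: Y_def W_def cc_norm)
  also have "\<dots> = s\<^sup>2 * (1 + sqrt 2)\<^sup>2 * (\<Sum>p\<in>V \<times> {..<4}. (cmod (W (fst p) (snd p)))\<^sup>2)"
    by (simp add: sum.cartesian_product case_prod_unfold sum_distrib_left mult.assoc)
  also have "(\<Sum>p\<in>V \<times> {..<4}. (cmod (W (fst p) (snd p)))\<^sup>2) = (\<Sum>p\<in>psi ` D. (cmod (W (fst p) (snd p)))\<^sup>2)"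
  proof (rule sum.mono_neutral_right)
    show "finite (V \<times> {..<4::nat})" by (simp add: finV)
    show "psi ` D \<subseteq> V \<times> {..<4}" using Dv by (auto simp: psi_def dir_def dirof_lt)
    show "\<forall>p\<in>V \<times> {..<4} - psi ` D. (cmod (W (fst p) (snd p)))\<^sup>2 = 0"
    proof
      fix p assume p: "p \<in> V \<times> {..<4} - psi ` D"
      obtain w k where pk: "p = (w, k)" by (cases p)
      have k4: "k < 4" using p pk by auto
      show "(cmod (W (fst p) (snd p)))\<^sup>2 = 0"
      proof (cases "(w, addv w (dirv k)) \<in> D")
        case True
        then have "psi (w, addv w (dirv k)) = (w, k)"
          by (simp add: psi_def dir_def dirof_dirv[OF k4])
        then show ?thesis using True p pk by (metis DiffD2 image_eqI)
      qed (simp add: W_def Vw_def pk D_def)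
    qed
  qed
  also have "\<dots> = (\<Sum>f\<in>D. (cmod (v f))\<^sup>2)"
  proof (subst sum.reindex[OF inj_psi], rule sum.cong)
    fix f assume f: "f \<in> D"
    have "(fst f, addv (fst f) (dirv (dir f))) = f" using dirv_dir[OF f] by simp
    then show "((\<lambda>p. (cmod (W (fst p) (snd p)))\<^sup>2) \<circ> psi) f = (cmod (v f))\<^sup>2"
      using f by (simp add: psi_def W_def Vw_def D_def)
  qed simp
  finally show ?thesis by (simp add: power_mult_distrib mult_ac)
qed

lemma app_norm:
  "L2_set (\<lambda>e. cmod (appL a b c d x v e)) (rectD a b c d)
     \<le> (1 + sqrt 2) * supnorm (rectE a b c d) x * L2_set (\<lambda>e. cmod (v e)) (rectD a b c d)"
proof -
  have s0: "0 \<le> supnorm (rectE a b c d) x" by (simp add: supnorm_nonneg finite_rectE)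
  have "L2_set (\<lambda>e. cmod (appL a b c d x v e)) (rectD a b c d)
      \<le> sqrt (((1 + sqrt 2) * supnorm (rectE a b c d) x)\<^sup>2 * (\<Sum>f\<in>rectD a b c d. (cmod (v f))\<^sup>2))"
    unfolding L2_set_def by (rule real_sqrt_le_mono, rule app_norm_sq)
  also have "\<dots> = (1 + sqrt 2) * supnorm (rectE a b c d) x * L2_set (\<lambda>e. cmod (v e)) (rectD a b c d)"
    using s0 by (simp add: real_sqrt_mult L2_set_def)
  finally show ?thesis .
qed


definition deltaE :: "vert \<times> vert \<Rightarrow> vert \<times> vert \<Rightarrow> complex" where
  "deltaE e0 = (\<lambda>f. if f = e0 then 1 else 0)"

lemma iter_norm:
  "L2_set (\<lambda>e. cmod ((appL a b c d x ^^ k) v e)) (rectD a b c d)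
     \<le> ((1 + sqrt 2) * supnorm (rectE a b c d) x) ^ k * L2_set (\<lambda>e. cmod (v e)) (rectD a b c d)"
proof (induction k)
  case 0 then show ?case by simp
next
  case (Suc k)
  have s0: "0 \<le> (1 + sqrt 2) * supnorm (rectE a b c d) x"
    by (simp add: supnorm_nonneg finite_rectE)
  have "L2_set (\<lambda>e. cmod ((appL a b c d x ^^ Suc k) v e)) (rectD a b c d)
      \<le> (1 + sqrt 2) * supnorm (rectE a b c d) x * L2_set (\<lambda>e. cmod ((appL a b c d x ^^ k) v e)) (rectD a b c d)"
    by (simp add: app_norm)
  also have "\<dots> \<le> (1 + sqrt 2) * supnorm (rectE a b c d) x * (((1 + sqrt 2) * supnorm (rectE a b c d) x) ^ k * L2_set (\<lambda>e. cmod (v e)) (rectD a b c d))"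
    by (rule mult_left_mono[OF Suc s0])
  finally show ?case by (simp add: mult_ac)
qed

lemma diag_bound:
  assumes "e0 \<in> rectD a b c d"
  shows "cmod ((appL a b c d x ^^ k) (deltaE e0) e0) \<le> ((1 + sqrt 2) * supnorm (rectE a b c d) x) ^ k"
proof -
  have "cmod ((appL a b c d x ^^ k) (deltaE e0) e0) \<le> L2_set (\<lambda>e. cmod ((appL a b c d x ^^ k) (deltaE e0) e)) (rectD a b c d)"
    by (rule member_le_L2_set[OF finite_rectD assms])
  also have "\<dots> \<le> ((1 + sqrt 2) * supnorm (rectE a b c d) x) ^ k * L2_set (\<lambda>e. cmod (deltaE e0 e)) (rectD a b c d)"
    by (rule iter_norm)
  also have "L2_set (\<lambda>e. cmod (deltaE e0 e)) (rectD a b c d) = 1"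
  proof -
    have "(\<Sum>e\<in>rectD a b c d. (cmod (deltaE e0 e))\<^sup>2) = (\<Sum>e\<in>rectD a b c d. if e = e0 then 1 else 0)"
      by (rule sum.cong) (auto simp: deltaE_def)
    also have "\<dots> = 1" using assms finite_rectD by simp
    finally show ?thesis by (simp add: L2_set_def)
  qed
  finally show ?thesis by simp
qed

fun ch :: "(vert \<times> vert \<Rightarrow> vert \<times> vert \<Rightarrow> complex) \<Rightarrow> vert \<times> vert \<Rightarrow> vert \<times> vert \<Rightarrow> vert list \<Rightarrow> complex" where
  "ch M e0 e [] = (if e = e0 then 1 else 0)"
| "ch M e0 e (z # ws) = M e (snd e, z) * ch M e0 (snd e, z) ws"

definition LS :: "vert set \<Rightarrow> nat \<Rightarrow> vert list set" where
  "LS V k = {ws. set ws \<subseteq> V \<and> length ws = k}"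

lemma finite_LS: "finite V \<Longrightarrow> finite (LS V k)"
  unfolding LS_def by (rule finite_lists_length_eq)

lemma LS_Suc: "LS V (Suc k) = (\<lambda>(z, ws). z # ws) ` (V \<times> LS V k)"
  by (auto simp: LS_def length_Suc_conv)

lemma sum_LS_Suc:
  assumes "finite V"
  shows "(\<Sum>ws\<in>LS V (Suc k). h ws) = (\<Sum>z\<in>V. \<Sum>ws\<in>LS V k. h (z # ws))"
proof -
  have inj: "inj_on (\<lambda>(z, ws). z # ws) (V \<times> LS V k)" by (auto simp: inj_on_def)
  show ?thesis
    unfolding LS_Suc by (subst sum.reindex[OF inj]) (simp add: sum.cartesian_product case_prod_unfold)
qed

lemma sum_over_D:
  "(\<Sum>f\<in>rectD a b c d. Lam a b c d x e f * F f) = (\<Sum>z\<in>rectV a b c d. Lam a b c d x e (snd e, z) * F (snd e, z))"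
proof -
  define D where "D = rectD a b c d"
  define V where "V = rectV a b c d"
  define w where "w = snd e"
  have finD: "finite D" by (simp add: D_def finite_rectD)
  have finV: "finite V" by (simp add: V_def finite_rectV)
  have "(\<Sum>f\<in>D. Lam a b c d x e f * F f) = (\<Sum>f\<in>{f\<in>D. fst f = w}. Lam a b c d x e f * F f)"
    by (rule sum.mono_neutral_right) (use finD in \<open>auto simp: Lam_def w_def D_def\<close>)
  also have "{f\<in>D. fst f = w} = (\<lambda>z. (w, z)) ` {z\<in>V. (w, z) \<in> D}"
    using rectD_sub unfolding D_def V_def by force
  also have "(\<Sum>f\<in>(\<lambda>z. (w, z)) ` {z\<in>V. (w, z) \<in> D}. Lam a b c d x e f * F f)
      = (\<Sum>z\<in>{z\<in>V. (w, z) \<in> D}. Lam a b c d x e (w, z) * F (w, z))"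
    by (subst sum.reindex) (auto simp: inj_on_def)
  also have "\<dots> = (\<Sum>z\<in>V. Lam a b c d x e (w, z) * F (w, z))"
    by (rule sum.mono_neutral_left) (use finV in \<open>auto simp: Lam_def D_def\<close>)
  finally show ?thesis by (simp add: D_def V_def w_def)
qed

lemma iter_ch:
  "(appL a b c d x ^^ k) (deltaE e0) e = (\<Sum>ws\<in>LS (rectV a b c d) k. ch (Lam a b c d x) e0 e ws)"
proof (induction k arbitrary: e)
  case 0
  have "LS (rectV a b c d) 0 = {[]}" by (auto simp: LS_def)
  then show ?case by (simp add: deltaE_def)
next
  case (Suc k)
  have "(appL a b c d x ^^ Suc k) (deltaE e0) e
      = (\<Sum>f\<in>rectD a b c d. Lam a b c d x e f * (appL a b c d x ^^ k) (deltaE e0) f)"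
    by (simp add: appL_def)
  also have "\<dots> = (\<Sum>z\<in>rectV a b c d. Lam a b c d x e (snd e, z) * (appL a b c d x ^^ k) (deltaE e0) (snd e, z))"
    by (rule sum_over_D)
  also have "\<dots> = (\<Sum>z\<in>rectV a b c d. \<Sum>ws\<in>LS (rectV a b c d) k. ch (Lam a b c d x) e0 e (z # ws))"
    by (simp add: Suc sum_distrib_left)
  also have "\<dots> = (\<Sum>ws\<in>LS (rectV a b c d) (Suc k). ch (Lam a b c d x) e0 e ws)"
    by (rule sum_LS_Suc[OF finite_rectV, symmetric])
  finally show ?case .
qed


definition pe :: "vert list \<Rightarrow> nat \<Rightarrow> vert \<times> vert" where "pe p i = (p ! i, p ! (i + 1))"

lemma ch_formula:
  "ch M e0 e ws = (\<Prod>i<length ws. M (pe (fst e # snd e # ws) i) (pe (fst e # snd e # ws) (Suc i)))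
      * (if pe (fst e # snd e # ws) (length ws) = e0 then 1 else 0)"
proof (induction ws arbitrary: e)
  case Nil then show ?case by (simp add: pe_def)
next
  case (Cons z ws)
  show ?case
    by (simp add: Cons prod.lessThan_Suc_shift pe_def mult.assoc del: prod.lessThan_Suc)
qed

lemma ch_nonzero: "ch M e0 e ws \<noteq> 0 \<Longrightarrow> pe (fst e # snd e # ws) (length ws) = e0"
  by (subst (asm) ch_formula) (simp split: if_splits)

definition cyE :: "vert list \<Rightarrow> nat \<Rightarrow> vert \<times> vert" where
  "cyE vs i = (vs ! (i mod length vs), vs ! ((i + 1) mod length vs))"

definition tprod :: "(vert \<times> vert \<Rightarrow> vert \<times> vert \<Rightarrow> complex) \<Rightarrow> vert list \<Rightarrow> complex" where
  "tprod M vs = (\<Prod>i<length vs. M (cyE vs i) (cyE vs (Suc i)))"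

lemma ch_tprod:
  assumes "2 \<le> length vs"
  shows "ch M (vs!0, vs!1) (vs!0, vs!1) (rotate 2 vs) = tprod M vs"
proof -
  define r where "r = length vs"
  define p where "p = vs!0 # vs!1 # rotate 2 vs"
  have r2: "2 \<le> r" using assms by (simp add: r_def)
  have pn: "p ! i = vs ! (i mod r)" if "i < r + 2" for i
  proof (cases i)
    case 0 then show ?thesis using r2 by (simp add: p_def)
  next
    case (Suc j)
    show ?thesis
    proof (cases j)
      case 0 then show ?thesis using r2 Suc by (simp add: p_def)
    next
      case (Suc m)
      then have "m < r" using that \<open>i = Suc j\<close> by simp
      then show ?thesis using Suc \<open>i = Suc j\<close> by (simp add: p_def nth_rotate r_def)
    qed
  qed
  have pe_cy: "pe p i = cyE vs i" if "i \<le> r" for i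
    using that pn[of i] pn[of "i+1"] by (simp add: pe_def cyE_def r_def)
  have s1: "Suc r mod r = 1"
  proof -
    have "Suc r mod r = (r + 1) mod r" by simp
    also have "\<dots> = 1 mod r" by (rule mod_add_self1)
    also have "\<dots> = 1" using r2 by simp
    finally show ?thesis .
  qed
  have last: "pe p r = (vs!0, vs!1)"
    using pn[of r] pn[of "r+1"] r2 s1 by (simp add: pe_def)
  have eq: "fst (vs!0, vs!1) # snd (vs!0, vs!1) # rotate 2 vs = p" by (simp add: p_def)
  have "ch M (vs!0, vs!1) (vs!0, vs!1) (rotate 2 vs) = (\<Prod>i<r. M (pe p i) (pe p (Suc i)))"
    using ch_formula[of M "(vs!0, vs!1)" "(vs!0, vs!1)" "rotate 2 vs", unfolded eq]
    by (simp add: r_def[symmetric] last)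
  also have "\<dots> = tprod M vs"
    unfolding tprod_def r_def[symmetric] by (rule prod.cong) (simp_all add: pe_cy)
  finally show ?thesis .
qed

lemma trace_id:
  assumes r2: "2 \<le> r"
  shows "(\<Sum>vs\<in>LS (rectV a b c d) r. tprod (Lam a b c d x) vs)
       = (\<Sum>e0\<in>rectD a b c d. (appL a b c d x ^^ r) (deltaE e0) e0)"
proof -
  define V where "V = rectV a b c d"
  define D where "D = rectD a b c d"
  define M where "M = Lam a b c d x"
  define A where "A = {vs\<in>LS V r. (vs!0, vs!1) \<in> D}"
  define Phi where "Phi = (\<lambda>vs::vert list. ((vs!0, vs!1), rotate 2 vs))"
  define g where "g = (\<lambda>q::(vert\<times>vert)\<times>vert list. ch M (fst q) (fst q) (snd q))"
  have finV: "finite V" by (simp add: V_def finite_rectV)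
  have finD: "finite D" by (simp add: D_def finite_rectD)
  have "(\<Sum>vs\<in>LS V r. tprod M vs) = (\<Sum>vs\<in>A. tprod M vs)"
  proof (rule sum.mono_neutral_right)
    show "finite (LS V r)" by (rule finite_LS[OF finV])
    show "A \<subseteq> LS V r" by (auto simp: A_def)
    show "\<forall>vs\<in>LS V r - A. tprod M vs = 0"
    proof
      fix vs assume vs: "vs \<in> LS V r - A"
      then have len: "length vs = r" and nd: "(vs!0, vs!1) \<notin> D" by (auto simp: A_def LS_def)
      have "cyE vs 0 = (vs!0, vs!1)" using len r2 by (simp add: cyE_def)
      then have "M (cyE vs 0) (cyE vs (Suc 0)) = 0" using nd by (simp add: M_def Lam_def D_def)
      then show "tprod M vs = 0" unfolding tprod_def using len r2
        by (subst prod_zero_iff) auto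
    qed
  qed
  also have "\<dots> = (\<Sum>vs\<in>A. g (Phi vs))"
  proof (rule sum.cong)
    fix vs assume "vs \<in> A"
    then have "2 \<le> length vs" using r2 by (simp add: A_def LS_def)
    then show "tprod M vs = g (Phi vs)" using ch_tprod[of vs M] by (simp add: g_def Phi_def)
  qed simp
  also have "\<dots> = (\<Sum>q\<in>Phi ` A. g q)"
  proof (rule sum.reindex[symmetric, unfolded comp_def], rule inj_onI)
    fix v1 v2 assume v: "v1 \<in> A" "v2 \<in> A" "Phi v1 = Phi v2"
    then have "rotate 2 v1 = rotate 2 v2" "length v1 = r" "length v2 = r"
      by (auto simp: Phi_def A_def LS_def)
    then have "rotate (r - 2) (rotate 2 v1) = rotate (r - 2) (rotate 2 v2)" by simp
    moreover have rr: "r - 2 + 2 = r" using r2 by simp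
    ultimately have "rotate r v1 = rotate r v2" by (simp only: rotate_rotate rr)
    then show "v1 = v2" using \<open>length v1 = r\<close> \<open>length v2 = r\<close> by simp
  qed
  also have "\<dots> = (\<Sum>q\<in>D \<times> LS V r. g q)"
  proof (rule sum.mono_neutral_left)
    show "finite (D \<times> LS V r)" using finD finite_LS[OF finV] by simp
    show "Phi ` A \<subseteq> D \<times> LS V r" by (auto simp: Phi_def A_def LS_def)
    show "\<forall>q\<in>D \<times> LS V r - Phi ` A. g q = 0"
    proof (rule ballI, rule ccontr)
      fix q assume q: "q \<in> D \<times> LS V r - Phi ` A" and nz: "g q \<noteq> 0"
      obtain e0 ws where qe: "q = (e0, ws)" by (cases q)
      have ws: "set ws \<subseteq> V" "length ws = r" and e0: "e0 \<in> D" using q qe by (auto simp: LS_def)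
      have "pe (fst e0 # snd e0 # ws) r = e0"
        using ch_nonzero[of M e0 e0 ws] nz ws by (simp add: g_def qe)
      obtain m where rm: "r = Suc (Suc m)" using r2 by (metis add_2_eq_Suc le_Suc_ex)
      have e0w: "e0 = (ws ! m, ws ! Suc m)"
        using \<open>pe (fst e0 # snd e0 # ws) r = e0\<close> by (simp add: pe_def rm)
      define vs where "vs = rotate m ws"
      have vl: "length vs = r" "set vs \<subseteq> V" using ws by (simp_all add: vs_def)
      have v0: "vs ! 0 = ws ! m" "vs ! 1 = ws ! Suc m"
        using ws rm by (simp_all add: vs_def nth_rotate)
      have "rotate 2 vs = rotate (m + 2) ws" unfolding vs_def by (simp only: rotate_rotate add.commute)
      also have "\<dots> = ws" by (rule rotate_id) (use ws rm in simp)
      finally have "rotate 2 vs = ws" .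
      then have "Phi vs = q" using v0 e0w by (simp add: Phi_def qe)
      moreover have "vs \<in> A" using vl v0 e0 e0w by (simp add: A_def LS_def)
      ultimately show False using q by blast
    qed
  qed
  also have "\<dots> = (\<Sum>e0\<in>D. \<Sum>ws\<in>LS V r. ch M e0 e0 ws)"
    by (simp add: sum.cartesian_product g_def case_prod_unfold)
  also have "\<dots> = (\<Sum>e0\<in>D. (appL a b c d x ^^ r) (deltaE e0) e0)"
    by (simp add: iter_ch M_def V_def)
  finally show ?thesis by (simp add: V_def D_def M_def)
qed


definition xprod :: "(vert set \<Rightarrow> complex) \<Rightarrow> vert list \<Rightarrow> complex" where
  "xprod x vs = (\<Prod>i<length vs. x {vs ! i, vs ! ((i + 1) mod length vs)})"

definition cfac :: "vert list \<Rightarrow> nat \<Rightarrow> complex" where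
  "cfac vs i = exp (\<i> * of_real (turn (vdiff (vs ! ((i + 1) mod length vs)) (vs ! i))
        (vdiff (vs ! ((i + 2) mod length vs)) (vs ! ((i + 1) mod length vs))) / 2))"

lemma lsgn_prod: "lsgn vs = - (\<Prod>i<length vs. cfac vs i)"
proof -
  have "\<i> * complex_of_real (winding vs / 2) = (\<Sum>i<length vs. \<i> * of_real (turn (vdiff (vs ! ((i + 1) mod length vs)) (vs ! i))
        (vdiff (vs ! ((i + 2) mod length vs)) (vs ! ((i + 1) mod length vs))) / 2))"
    by (simp add: winding_def Let_def sum_divide_distrib sum_distrib_left)
  then show ?thesis by (simp add: lsgn_def exp_sum cfac_def)
qed

lemma mod_SS: "Suc (Suc i) mod n = ((i + 1) mod n + 1) mod n"
  by (simp add: mod_Suc_eq)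

lemma closed_pathD:
  assumes "closed_path a b c d vs" "i < length vs"
  shows "radj a b c d (vs ! i) (vs ! ((i + 1) mod length vs))"
        "radj a b c d (vs ! ((i + 1) mod length vs)) (vs ! ((i + 2) mod length vs))"
        "vs ! ((i + 2) mod length vs) \<noteq> vs ! i"
proof -
  have n0: "0 < length vs" using assms(2) by linarith
  have all: "\<forall>i < length vs. radj a b c d (vs ! i) (vs ! ((i + 1) mod length vs)) \<and>
                      vs ! ((i + 2) mod length vs) \<noteq> vs ! i"
    using assms(1) unfolding closed_path_def by blast
  show "radj a b c d (vs ! i) (vs ! ((i + 1) mod length vs))"
       "vs ! ((i + 2) mod length vs) \<noteq> vs ! i"
    using all assms(2) by blast+
  have "(i + 1) mod length vs < length vs" using n0 by simp
  then have "radj a b c d (vs ! ((i + 1) mod length vs)) (vs ! (((i + 1) mod length vs + 1) mod length vs))"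
    using assms(1) unfolding closed_path_def by blast
  then show "radj a b c d (vs ! ((i + 1) mod length vs)) (vs ! ((i + 2) mod length vs))"
    using mod_SS[of i "length vs"] by (simp add: numeral_2_eq_2)
qed

lemma cyE_simps:
  assumes "i < length vs"
  shows "cyE vs i = (vs ! i, vs ! ((i + 1) mod length vs))"
        "cyE vs (Suc i) = (vs ! ((i + 1) mod length vs), vs ! ((i + 2) mod length vs))"
  using assms mod_SS[of i "length vs"] by (simp_all add: cyE_def numeral_2_eq_2)

lemma tprod_closed:
  assumes "closed_path a b c d vs"
  shows "tprod (Lam a b c d x) vs = - (lsgn vs * xprod x vs)"
proof -
  have "tprod (Lam a b c d x) vs = (\<Prod>i<length vs. x {vs ! i, vs ! ((i + 1) mod length vs)} * cfac vs i)"
    unfolding tprod_def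
  proof (rule prod.cong)
    fix i assume "i \<in> {..<length vs}"
    then have i: "i < length vs" by simp
    show "Lam a b c d x (cyE vs i) (cyE vs (Suc i)) = x {vs ! i, vs ! ((i + 1) mod length vs)} * cfac vs i"
      using closed_pathD[OF assms i] by (simp add: cyE_simps[OF i] Lam_def rectD_def cfac_def)
  qed simp
  also have "\<dots> = xprod x vs * (\<Prod>i<length vs. cfac vs i)"
    by (simp add: prod.distrib xprod_def)
  finally show ?thesis by (simp add: lsgn_prod)
qed

lemma tprod_nonclosed:
  assumes "vs \<noteq> []" "\<not> closed_path a b c d vs"
  shows "tprod (Lam a b c d x) vs = 0"
proof -
  obtain i where i: "i < length vs" and
    bad: "\<not> radj a b c d (vs ! i) (vs ! ((i + 1) mod length vs)) \<or> vs ! ((i + 2) mod length vs) = vs ! i"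
    using assms unfolding closed_path_def by blast
  have "Lam a b c d x (cyE vs i) (cyE vs (Suc i)) = 0"
    using bad by (auto simp: cyE_simps[OF i] Lam_def rectD_def)
  then show ?thesis unfolding tprod_def using i by (subst prod_zero_iff) auto
qed

definition CP :: "int \<Rightarrow> int \<Rightarrow> int \<Rightarrow> int \<Rightarrow> nat \<Rightarrow> vert list set" where
  "CP a b c d r = {vs. closed_path a b c d vs \<and> length vs = r}"

lemma closed_path_set: "closed_path a b c d vs \<Longrightarrow> set vs \<subseteq> rectV a b c d"
proof
  fix v assume cp: "closed_path a b c d vs" and "v \<in> set vs"
  then obtain i where i: "i < length vs" "vs ! i = v" by (auto simp: in_set_conv_nth)
  then show "v \<in> rectV a b c d" using closed_pathD(1)[OF cp i(1)] by (simp add: radj_def)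
qed

lemma CP_sub: "CP a b c d r \<subseteq> LS (rectV a b c d) r"
  by (auto simp: CP_def LS_def dest: closed_path_set)

lemma finite_CP: "finite (CP a b c d r)"
  using finite_subset[OF CP_sub finite_LS[OF finite_rectV]] .

lemma tprod_sum:
  assumes "1 \<le> r"
  shows "(\<Sum>vs\<in>LS (rectV a b c d) r. tprod (Lam a b c d x) vs) = - (\<Sum>vs\<in>CP a b c d r. lsgn vs * xprod x vs)"
proof -
  have "(\<Sum>vs\<in>LS (rectV a b c d) r. tprod (Lam a b c d x) vs) = (\<Sum>vs\<in>CP a b c d r. tprod (Lam a b c d x) vs)"
  proof (rule sum.mono_neutral_right[OF finite_LS[OF finite_rectV] CP_sub], rule ballI)
    fix vs assume "vs \<in> LS (rectV a b c d) r - CP a b c d r"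
    then have "vs \<noteq> []" "\<not> closed_path a b c d vs" using assms by (auto simp: LS_def CP_def)
    then show "tprod (Lam a b c d x) vs = 0" by (rule tprod_nonclosed)
  qed
  also have "\<dots> = (\<Sum>vs\<in>CP a b c d r. - (lsgn vs * xprod x vs))"
    by (rule sum.cong) (simp_all add: CP_def tprod_closed)
  finally show ?thesis by (simp add: sum_negf)
qed


lemma shift_inj:
  assumes "(k + i) mod n = (k + j) mod (n::nat)" "i < n" "j < n"
  shows "i = j"
proof -
  have *: "i = j" if "i \<le> j" "j < n" "(k + i) mod n = (k + j) mod n" for i j :: nat
  proof (rule ccontr)
    assume "i \<noteq> j"
    have "n dvd (k + j) - (k + i)" using mod_eq_dvd_iff_nat[of "k+i" "k+j" n] that by simp
    then have "n dvd j - i" by simp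
    moreover have "0 < j - i" using that \<open>i \<noteq> j\<close> by simp
    ultimately have "n \<le> j - i" by (rule dvd_imp_le)
    then show False using that by simp
  qed
  show ?thesis using *[of i j] *[of j i] assms by (metis nat_le_linear)
qed

lemma bij_shift: "0 < n \<Longrightarrow> bij_betw (\<lambda>j. (k + j) mod n) {..<n} {..<(n::nat)}"
  unfolding bij_betw_def
proof
  assume n: "0 < n"
  show inj: "inj_on (\<lambda>j. (k + j) mod n) {..<n}" by (rule inj_onI) (auto dest: shift_inj)
  show "(\<lambda>j. (k + j) mod n) ` {..<n} = {..<n}"
    by (rule endo_inj_surj[OF _ _ inj]) (use n in auto)
qed

lemma sc_pd: "k < n \<Longrightarrow> ((k + n - 1) mod n + 1) mod n = (k::nat)"
proof -
  assume k: "k < n"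
  have "((k + n - 1) mod n + 1) mod n = (k + n - 1 + 1) mod n" by (simp add: mod_Suc_eq)
  also have "k + n - 1 + 1 = k + n" using k by simp
  finally show ?thesis using k by simp
qed

lemma pd_sc: "k < n \<Longrightarrow> ((k + 1) mod n + n - 1) mod n = (k::nat)"
proof -
  assume k: "k < n"
  have "((k + 1) mod n + n - 1) mod n = ((k + 1) mod n + (n - 1)) mod n" using k by simp
  also have "\<dots> = (k + 1 + (n - 1)) mod n" by (simp add: mod_add_left_eq)
  also have "k + 1 + (n - 1) = k + n" using k by simp
  finally show ?thesis using k by simp
qed

lemma scsc: "((k + 1) mod n + 1) mod n = (k + 2) mod (n::nat)"
  using mod_SS[of k n] by (simp add: numeral_2_eq_2)

lemma bij_pd: "0 < n \<Longrightarrow> bij_betw (\<lambda>j. (j + n - 1) mod n) {..<n} {..<(n::nat)}"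
proof -
  assume n: "0 < n"
  have "\<And>j. j + n - 1 = (n - 1) + j" using n by simp
  then have "(\<lambda>j. (j + n - 1) mod n) = (\<lambda>j. ((n - 1) + j) mod n)" by presburger
  then show ?thesis using bij_shift[OF n, of "n - 1"] by simp
qed

definition CC :: "vert \<Rightarrow> vert \<Rightarrow> vert \<Rightarrow> complex" where
  "CC p q r = exp (\<i> * of_real (turn (vdiff q p) (vdiff r q) / 2))"

lemma cfac_CC: "cfac vs i = CC (vs ! i) (vs ! ((i + 1) mod length vs)) (vs ! ((i + 2) mod length vs))"
  by (simp add: cfac_def CC_def)

lemma vdiff_swap_dirv: "j < 4 \<Longrightarrow> vdiff q p = dirv j \<Longrightarrow> vdiff p q = dirv ((j + 2) mod 4)"
  by (drule four_cases) (elim disjE; auto simp: vdiff_def dirv_def prod_eq_iff)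

lemma cc_rev: "j < 4 \<Longrightarrow> k < 4 \<Longrightarrow> cc ((k + 2) mod 4) ((j + 2) mod 4) = cnj (cc j k)"
  by (drule four_cases, drule four_cases) (elim disjE; simp add: cc_def)

lemma adj_data:
  assumes "radj a b c d p q" "radj a b c d q r" "r \<noteq> p"
  obtains j k where "j < 4" "k < 4" "vdiff q p = dirv j" "vdiff r q = dirv k" "k \<noteq> (j + 2) mod 4"
proof -
  define j where "j = dirof (vdiff q p)"
  define k where "k = dirof (vdiff r q)"
  have j: "j < 4" "vdiff q p = dirv j" using radj_dirv[OF assms(1)] by (simp_all add: j_def dirof_lt)
  have k: "k < 4" "vdiff r q = dirv k" using radj_dirv[OF assms(2)] by (simp_all add: k_def dirof_lt)
  have "q = addv p (dirv j)" "r = addv q (dirv k)" using j k by (metis addv_vdiff)+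
  then have "k \<noteq> (j + 2) mod 4" using uturn[OF j(1) k(1), of p] assms(3) by auto
  then show ?thesis using that j k by blast
qed

lemma CC_cc:
  assumes "radj a b c d p q" "radj a b c d q r" "r \<noteq> p"
  shows "CC p q r = cc (dirof (vdiff q p)) (dirof (vdiff r q))"
proof -
  obtain j k where jk: "j < 4" "k < 4" "vdiff q p = dirv j" "vdiff r q = dirv k" "k \<noteq> (j + 2) mod 4"
    using adj_data[OF assms] .
  have "CC p q r = cc j k" unfolding CC_def jk(3,4) by (rule turn_cc[OF jk(1,2,5)])
  with jk show ?thesis by (simp add: dirof_dirv)
qed

lemma CC_rev:
  assumes "radj a b c d p q" "radj a b c d q r" "r \<noteq> p"
  shows "CC r q p = cnj (CC p q r)"
proof -
  obtain j k where jk: "j < 4" "k < 4" "vdiff q p = dirv j" "vdiff r q = dirv k" "k \<noteq> (j + 2) mod 4"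
    using adj_data[OF assms] .
  have a1: "vdiff q r = dirv ((k + 2) mod 4)" by (rule vdiff_swap_dirv[OF jk(2,4)])
  have a2: "vdiff p q = dirv ((j + 2) mod 4)" by (rule vdiff_swap_dirv[OF jk(1,3)])
  have "((k + 2) mod 4 + 2) mod 4 = (k + 4) mod 4" by (simp only: mod_add_left_eq) (simp add: add.assoc)
  also have "\<dots> = k" using jk(2) by simp
  finally have ne: "(j + 2) mod 4 \<noteq> ((k + 2) mod 4 + 2) mod 4" using jk(5) by simp
  have "CC r q p = cc ((k + 2) mod 4) ((j + 2) mod 4)"
    unfolding CC_def a1 a2 by (rule turn_cc) (use ne in simp_all)
  also have "\<dots> = cnj (cc j k)" by (rule cc_rev[OF jk(1,2)])
  also have "cc j k = CC p q r" unfolding CC_def jk(3,4) by (rule turn_cc[OF jk(1,2,5), symmetric])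
  finally show ?thesis .
qed

lemma cc_sq: "j < 4 \<Longrightarrow> k < 4 \<Longrightarrow> k \<noteq> (j + 2) mod 4 \<Longrightarrow> (cc j k)\<^sup>2 = cpt (dirv k) / cpt (dirv j)"
  apply (drule four_cases, drule four_cases)
  apply (elim disjE; simp add: cc_def cpt_dirv power2_eq_square ca_facts)
  done


lemma radj_sym: "radj a b c d u w \<Longrightarrow> radj a b c d w u"
  by (auto simp: radj_def abs_minus_commute)

lemma closed_path_len: "closed_path a b c d vs \<Longrightarrow> 0 < length vs"
  by (simp add: closed_path_def)

lemma cpt_dirv_nz: "k < 4 \<Longrightarrow> cpt (dirv k) \<noteq> 0"
  by (drule four_cases) (elim disjE; simp add: cpt_dirv)

lemma P_sq:
  assumes cp: "closed_path a b c d vs"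
  shows "(\<Prod>i<length vs. cfac vs i)\<^sup>2 = 1"
proof -
  define n where "n = length vs"
  have n0: "0 < n" using closed_path_len[OF cp] by (simp add: n_def)
  define om where "om = (\<lambda>i. cpt (dirv (dirof (vdiff (vs ! ((i + 1) mod n)) (vs ! i)))))"
  have sq: "(cfac vs i)\<^sup>2 = om ((i + 1) mod n) / om i" if i: "i < n" for i
  proof -
    have i': "i < length vs" using i by (simp add: n_def)
    obtain j k where jk: "j < 4" "k < 4" "vdiff (vs ! ((i + 1) mod n)) (vs ! i) = dirv j"
        "vdiff (vs ! ((i + 2) mod n)) (vs ! ((i + 1) mod n)) = dirv k" "k \<noteq> (j + 2) mod 4"
      using adj_data[OF closed_pathD[OF cp i']] unfolding n_def by blast
    have c: "cfac vs i = cc j k"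
      unfolding cfac_def n_def[symmetric] jk(3,4) by (rule turn_cc[OF jk(1,2,5)])
    have "om ((i + 1) mod n) = cpt (dirv k)"
      using jk(4) scsc[of i n] by (simp add: om_def dirof_dirv[OF jk(2)])
    moreover have "om i = cpt (dirv j)" using jk(3) by (simp add: om_def dirof_dirv[OF jk(1)])
    ultimately show ?thesis using c cc_sq[OF jk(1,2,5)] by simp
  qed
  have nz: "om i \<noteq> 0" for i unfolding om_def by (rule cpt_dirv_nz[OF dirof_lt])
  have "(\<Prod>i<length vs. cfac vs i)\<^sup>2 = (\<Prod>i<n. (cfac vs i)\<^sup>2)"
    by (simp add: n_def prod_power_distrib)
  also have "\<dots> = (\<Prod>i<n. om ((i + 1) mod n) / om i)"
    by (rule prod.cong) (simp_all add: sq)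
  also have "\<dots> = (\<Prod>i<n. om ((i + 1) mod n)) / (\<Prod>i<n. om i)"
    by (rule prod_dividef)
  also have "(\<Prod>i<n. om ((i + 1) mod n)) = (\<Prod>i<n. om i)"
    using prod.reindex_bij_betw[OF bij_shift[OF n0, of 1], of om] by (simp add: add.commute)
  also have "(\<Prod>i<n. om i) / (\<Prod>i<n. om i) = 1"
    using nz by (simp add: prod_zero_iff)
  finally show ?thesis .
qed

lemma cnj_P:
  assumes cp: "closed_path a b c d vs"
  shows "cnj (\<Prod>i<length vs. cfac vs i) = (\<Prod>i<length vs. cfac vs i)"
proof -
  have "(\<Prod>i<length vs. cfac vs i) = 1 \<or> (\<Prod>i<length vs. cfac vs i) = -1"
    using P_sq[OF cp] by (simp add: power2_eq_1_iff)
  then show ?thesis by (metis complex_cnj_one complex_cnj_minus)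
qed

lemma transfer_shift:
  assumes cp: "closed_path a b c d vs" and len: "length w = length vs"
    and bij: "bij_betw \<sigma> {..<length vs} {..<length vs}"
    and wv: "\<And>j. j < length vs \<Longrightarrow> w ! j = vs ! (\<sigma> j)"
    and sh: "\<And>j. j < length vs \<Longrightarrow> \<sigma> ((j + 1) mod length vs) = (\<sigma> j + 1) mod length vs"
  shows "closed_path a b c d w" "xprod x w = xprod x vs"
    "(\<Prod>i<length w. cfac w i) = (\<Prod>i<length vs. cfac vs i)"
proof -
  define n where "n = length vs"
  have n0: "0 < n" using closed_path_len[OF cp] by (simp add: n_def)
  have sl: "\<sigma> j < n" if "j < n" for j using bij_betwE[OF bij] that by (auto simp: n_def)
  have w1: "w ! ((j + 1) mod n) = vs ! ((\<sigma> j + 1) mod n)" if "j < n" for j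
    using wv[of "(j + 1) mod n"] sh[of j] that n0 by (simp add: n_def)
  have w2: "w ! ((j + 2) mod n) = vs ! ((\<sigma> j + 2) mod n)" if "j < n" for j
  proof -
    have "(j + 2) mod n = ((j + 1) mod n + 1) mod n" by (rule scsc[symmetric])
    then have "w ! ((j + 2) mod n) = vs ! (\<sigma> (((j + 1) mod n + 1) mod n))"
      using wv n0 by (simp add: n_def)
    also have "\<sigma> (((j + 1) mod n + 1) mod n) = (\<sigma> ((j + 1) mod n) + 1) mod n"
      using sh[of "(j + 1) mod n"] n0 by (simp add: n_def)
    also have "\<dots> = (\<sigma> j + 2) mod n" using sh[of j] that by (simp add: n_def mod_Suc_eq)
    finally show ?thesis .
  qed
  show "closed_path a b c d w"
    unfolding closed_path_def
  proof (intro conjI allI impI)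
    show "w \<noteq> []" using len n0 by (auto simp: n_def)
    fix j assume "j < length w"
    then have j: "j < n" using len by (simp add: n_def)
    have s: "\<sigma> j < length vs" using sl[OF j] by (simp add: n_def)
    show "radj a b c d (w ! j) (w ! ((j + 1) mod length w))"
      using closed_pathD(1)[OF cp s] w1[OF j] wv[of j] j len by (simp add: n_def)
    show "w ! ((j + 2) mod length w) \<noteq> w ! j"
      using closed_pathD(3)[OF cp s] w2[OF j] wv[of j] j len by (simp add: n_def)
  qed
  show "xprod x w = xprod x vs"
  proof -
    have "xprod x w = (\<Prod>j<n. (\<lambda>k. x {vs ! k, vs ! ((k + 1) mod n)}) (\<sigma> j))"
      unfolding xprod_def len n_def[symmetric]
    proof (rule prod.cong)
      fix j assume "j \<in> {..<n}"
      then have j: "j < n" by simp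
      show "x {w ! j, w ! ((j + 1) mod n)} = (\<lambda>k. x {vs ! k, vs ! ((k + 1) mod n)}) (\<sigma> j)"
        using w1[OF j] wv[of j] j by (simp add: n_def)
    qed simp
    also have "\<dots> = xprod x vs"
      unfolding xprod_def n_def by (rule prod.reindex_bij_betw[OF bij])
    finally show ?thesis .
  qed
  show "(\<Prod>i<length w. cfac w i) = (\<Prod>i<length vs. cfac vs i)"
  proof -
    have "(\<Prod>i<length w. cfac w i) = (\<Prod>j<n. cfac vs (\<sigma> j))"
      unfolding len n_def[symmetric]
    proof (rule prod.cong)
      fix j assume "j \<in> {..<n}"
      then have j: "j < n" by simp
      show "cfac w j = cfac vs (\<sigma> j)"
        using w1[OF j] w2[OF j] wv[of j] j len by (simp add: n_def cfac_CC)
    qed simp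
    also have "\<dots> = (\<Prod>i<length vs. cfac vs i)"
      unfolding n_def by (rule prod.reindex_bij_betw[OF bij])
    finally show ?thesis .
  qed
qed


lemma transfer_refl:
  assumes cp: "closed_path a b c d vs" and len: "length w = length vs"
    and bij: "bij_betw \<sigma> {..<length vs} {..<length vs}"
    and wv: "\<And>j. j < length vs \<Longrightarrow> w ! j = vs ! (\<sigma> j)"
    and rf: "\<And>j. j < length vs \<Longrightarrow> \<sigma> ((j + 1) mod length vs) = (\<sigma> j + length vs - 1) mod length vs"
  shows "closed_path a b c d w" "xprod x w = xprod x vs"
    "(\<Prod>i<length w. cfac w i) = cnj (\<Prod>i<length vs. cfac vs i)"
proof -
  define n where "n = length vs"
  have n0: "0 < n" using closed_path_len[OF cp] by (simp add: n_def)
  have sl: "\<sigma> j < n" if "j < n" for j using bij_betwE[OF bij] that by (auto simp: n_def)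
  define \<tau> where "\<tau> = (\<lambda>j. (\<sigma> j + n - 1) mod n)"
  define \<rho> where "\<rho> = (\<lambda>j. (\<tau> j + n - 1) mod n)"
  have tl: "\<tau> j < n" for j using n0 by (simp add: \<tau>_def)
  have rl: "\<rho> j < n" for j using n0 by (simp add: \<rho>_def)
  have st: "\<sigma> j = (\<tau> j + 1) mod n" if "j < n" for j
    using sc_pd[OF sl[OF that]] by (simp add: \<tau>_def)
  have tr: "\<tau> j = (\<rho> j + 1) mod n" for j
    using sc_pd[OF tl[of j]] by (simp add: \<rho>_def)
  have sr: "\<sigma> j = (\<rho> j + 2) mod n" if "j < n" for j
    using st[OF that] tr[of j] scsc[of "\<rho> j" n] by simp
  have w1: "w ! ((j + 1) mod n) = vs ! (\<tau> j)" if "j < n" for j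
    using wv[of "(j + 1) mod n"] rf[of j] that n0 by (simp add: n_def \<tau>_def)
  have w2: "w ! ((j + 2) mod n) = vs ! (\<rho> j)" if "j < n" for j
  proof -
    have "(j + 2) mod n = ((j + 1) mod n + 1) mod n" by (rule scsc[symmetric])
    then have "w ! ((j + 2) mod n) = vs ! (\<sigma> (((j + 1) mod n + 1) mod n))"
      using wv n0 by (simp add: n_def)
    also have "\<sigma> (((j + 1) mod n + 1) mod n) = (\<sigma> ((j + 1) mod n) + n - 1) mod n"
      using rf[of "(j + 1) mod n"] n0 by (simp add: n_def)
    also have "\<dots> = \<rho> j" using rf[of j] that by (simp add: n_def \<rho>_def \<tau>_def)
    finally show ?thesis .
  qed
  have bt: "bij_betw \<tau> {..<n} {..<n}"
  proof -
    have "bij_betw ((\<lambda>j. (j + n - 1) mod n) \<circ> \<sigma>) {..<n} {..<n}"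
      by (rule bij_betw_trans[OF _ bij_pd[OF n0]]) (use bij in \<open>simp add: n_def\<close>)
    then show ?thesis by (simp add: \<tau>_def comp_def)
  qed
  have br: "bij_betw \<rho> {..<n} {..<n}"
  proof -
    have "bij_betw ((\<lambda>j. (j + n - 1) mod n) \<circ> \<tau>) {..<n} {..<n}"
      by (rule bij_betw_trans[OF bt bij_pd[OF n0]])
    then show ?thesis by (simp add: \<rho>_def comp_def)
  qed
  show "closed_path a b c d w"
    unfolding closed_path_def
  proof (intro conjI allI impI)
    show "w \<noteq> []" using len n0 by (auto simp: n_def)
    fix j assume "j < length w"
    then have j: "j < n" using len by (simp add: n_def)
    have t: "\<tau> j < length vs" using tl[of j] by (simp add: n_def)
    have r: "\<rho> j < length vs" using rl[of j] by (simp add: n_def)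
    show "radj a b c d (w ! j) (w ! ((j + 1) mod length w))"
      using radj_sym[OF closed_pathD(1)[OF cp t]] w1[OF j] wv[of j] st[OF j] j len by (simp add: n_def)
    show "w ! ((j + 2) mod length w) \<noteq> w ! j"
      using closed_pathD(3)[OF cp r] w2[OF j] wv[of j] sr[OF j] j len by (simp add: n_def)
  qed
  show "xprod x w = xprod x vs"
  proof -
    have "xprod x w = (\<Prod>j<n. (\<lambda>k. x {vs ! k, vs ! ((k + 1) mod n)}) (\<tau> j))"
      unfolding xprod_def len n_def[symmetric]
    proof (rule prod.cong)
      fix j assume "j \<in> {..<n}"
      then have j: "j < n" by simp
      show "x {w ! j, w ! ((j + 1) mod n)} = (\<lambda>k. x {vs ! k, vs ! ((k + 1) mod n)}) (\<tau> j)"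
        using w1[OF j] wv[of j] st[OF j] j by (simp add: n_def insert_commute)
    qed simp
    also have "\<dots> = xprod x vs"
      unfolding xprod_def n_def by (rule prod.reindex_bij_betw[OF bt[unfolded n_def]])
    finally show ?thesis .
  qed
  show "(\<Prod>i<length w. cfac w i) = cnj (\<Prod>i<length vs. cfac vs i)"
  proof -
    have "(\<Prod>i<length w. cfac w i) = (\<Prod>j<n. cnj (cfac vs (\<rho> j)))"
      unfolding len n_def[symmetric]
    proof (rule prod.cong)
      fix j assume "j \<in> {..<n}"
      then have j: "j < n" by simp
      have r: "\<rho> j < length vs" using rl[of j] by (simp add: n_def)
      have "cfac w j = CC (vs ! ((\<rho> j + 2) mod n)) (vs ! ((\<rho> j + 1) mod n)) (vs ! (\<rho> j))"
        using w1[OF j] w2[OF j] wv[of j] sr[OF j] tr[of j] j len by (simp add: n_def cfac_CC)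
      also have "\<dots> = cnj (CC (vs ! (\<rho> j)) (vs ! ((\<rho> j + 1) mod n)) (vs ! ((\<rho> j + 2) mod n)))"
        using CC_rev[OF closed_pathD[OF cp r]] by (simp add: n_def)
      also have "\<dots> = cnj (cfac vs (\<rho> j))" by (simp add: cfac_CC n_def)
      finally show "cfac w j = cnj (cfac vs (\<rho> j))" .
    qed simp
    also have "\<dots> = cnj (\<Prod>j<n. cfac vs (\<rho> j))" by simp
    also have "(\<Prod>j<n. cfac vs (\<rho> j)) = (\<Prod>i<length vs. cfac vs i)"
      unfolding n_def by (rule prod.reindex_bij_betw[OF br[unfolded n_def]])
    finally show ?thesis .
  qed
qed

definition gw :: "(vert set \<Rightarrow> complex) \<Rightarrow> vert list \<Rightarrow> complex" where
  "gw x vs = lsgn vs * xprod x vs"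

lemma rotate_inv:
  assumes cp: "closed_path a b c d vs"
  shows "closed_path a b c d (rotate k vs)" "gw x (rotate k vs) = gw x vs"
proof -
  define n where "n = length vs"
  have n0: "0 < n" using closed_path_len[OF cp] by (simp add: n_def)
  have bij: "bij_betw (\<lambda>j. (k + j) mod n) {..<n} {..<n}" by (rule bij_shift[OF n0])
  have wv: "rotate k vs ! j = vs ! ((k + j) mod n)" if "j < n" for j
    using that by (simp add: nth_rotate n_def)
  have sh: "(k + (j + 1) mod n) mod n = ((k + j) mod n + 1) mod n" for j
    by (simp add: mod_add_right_eq mod_add_left_eq add.assoc mod_Suc_eq)
  note T = transfer_shift[OF cp, of "rotate k vs" "\<lambda>j. (k + j) mod n", unfolded n_def[symmetric]]
  show "closed_path a b c d (rotate k vs)" using T bij wv sh by (simp add: n_def)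
  have "xprod x (rotate k vs) = xprod x vs" "(\<Prod>i<length (rotate k vs). cfac (rotate k vs) i) = (\<Prod>i<length vs. cfac vs i)"
    using T bij wv sh by (simp_all add: n_def)
  then show "gw x (rotate k vs) = gw x vs" by (simp add: gw_def lsgn_prod)
qed

lemma rev_idx: "j < n \<Longrightarrow> n - 1 - (j + 1) mod n = (n - 1 - j + n - 1) mod (n::nat)"
proof (cases "j + 1 < n")
  case True
  assume "j < n"
  have eq: "n - 1 - j + n - 1 = (n - 2 - j) + n" using True by simp
  have "(n - 1 - j + n - 1) mod n = ((n - 2 - j) + n) mod n" by (simp only: eq)
  also have "\<dots> = (n - 2 - j) mod n" by (rule mod_add_self2)
  also have "\<dots> = n - 2 - j" using True by simp
  finally have "(n - 1 - j + n - 1) mod n = n - 2 - j" .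
  then show ?thesis using True by simp
next
  case False
  assume "j < n"
  then have "j = n - 1" using False by simp
  then show ?thesis using \<open>j < n\<close> by simp
qed

lemma rev_inv:
  assumes cp: "closed_path a b c d vs"
  shows "closed_path a b c d (rev vs)" "gw x (rev vs) = gw x vs"
proof -
  define n where "n = length vs"
  have n0: "0 < n" using closed_path_len[OF cp] by (simp add: n_def)
  have inj: "inj_on (\<lambda>j. n - 1 - j) {..<n}" by (rule inj_onI) auto
  have img: "(\<lambda>j. n - 1 - j) ` {..<n} = {..<n}" by (rule endo_inj_surj[OF _ _ inj]) auto
  have bij: "bij_betw (\<lambda>j. n - 1 - j) {..<n} {..<n}"
    unfolding bij_betw_def using inj img by blast
  have wv: "rev vs ! j = vs ! (n - 1 - j)" if "j < n" for j
    using that by (simp add: rev_nth n_def)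
  note T = transfer_refl[OF cp, of "rev vs" "\<lambda>j. n - 1 - j", unfolded n_def[symmetric]]
  show "closed_path a b c d (rev vs)" using T bij wv rev_idx by (simp add: n_def)
  have "xprod x (rev vs) = xprod x vs" "(\<Prod>i<length (rev vs). cfac (rev vs) i) = cnj (\<Prod>i<length vs. cfac vs i)"
    using T bij wv rev_idx by (simp_all add: n_def)
  then show "gw x (rev vs) = gw x vs" using cnj_P[OF cp] by (simp add: gw_def lsgn_prod)
qed


lemma no_refl:
  assumes cp: "closed_path a b c d l"
  shows "rev l \<noteq> rotate m l"
proof
  assume H: "rev l = rotate m l"
  define L where "L = length l"
  have L0: "0 < L" using closed_path_len[OF cp] by (simp add: L_def)
  have Hi: "l ! (L - 1 - i) = l ! ((m mod L + i) mod L)" if "i < L" for i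
  proof -
    have "rev l ! i = rotate m l ! i" using H by simp
    then show ?thesis using that by (simp add: rev_nth nth_rotate L_def mod_add_left_eq)
  qed
  have adj: False if i: "i < L" and e: "l ! (L - 1 - i) = l ! ((L - i) mod L)" for i
  proof -
    have t: "L - 1 - i < length l" using i by (simp add: L_def)
    have "(L - 1 - i + 1) = L - i" using i by simp
    then have "radj a b c d (l ! (L - 1 - i)) (l ! ((L - i) mod L))"
      using closed_pathD(1)[OF cp t] by (simp add: L_def)
    then show False using e radj_ne by metis
  qed
  have bt: False if i: "i < L" and e: "l ! (L - 1 - i) = l ! ((L + 1 - i) mod L)" for i
  proof -
    have t: "L - 1 - i < length l" using i by (simp add: L_def)
    have "(L - 1 - i + 2) = L + 1 - i" using i by simp
    then have "l ! ((L + 1 - i) mod L) \<noteq> l ! (L - 1 - i)"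
      using closed_pathD(3)[OF cp t] by (simp add: L_def)
    then show False using e by simp
  qed
  define m' where "m' = m mod L"
  have m'L: "m' < L" using L0 by (simp add: m'_def)
  show False
  proof (cases "m' = 0")
    case True
    then show False using Hi[of 0] adj[of 0] L0 by (simp add: m'_def)
  next
    case False
    show False
    proof (cases "m' = 1")
      case True
      have e1: "(L + 1 - 0) mod L = 1 mod L" by (metis diff_zero mod_add_self1)
      have e2: "(m mod L + 0) mod L = 1 mod L" using True by (simp add: m'_def)
      show False using Hi[OF L0] bt[OF L0] e1 e2 by metis
    next
      case False
      then have m2: "2 \<le> m'" using \<open>m' \<noteq> 0\<close> by simp
      show False
      proof (cases "even (L - m')")
        case True
        define i where "i = (L - m') div 2"
        have "2 * i = L - m'" using True by (simp add: i_def)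
        then have i: "i < L" "m' + i = L - i" using m2 m'L by auto
        then show False using Hi[OF i(1)] adj[OF i(1)] by (simp add: m'_def)
      next
        case False
        define i where "i = (L - m' + 1) div 2"
        have "2 * i = L - m' + 1" using False m'L by (simp add: i_def)
        then have i: "i < L" "m' + i = L + 1 - i" using m2 m'L by auto
        then show False using Hi[OF i(1)] bt[OF i(1)] by (simp add: m'_def)
      qed
    qed
  qed
qed

lemma rev_rot: "\<exists>k'. rev (rotate k xs) = rotate k' (rev xs)"
proof (cases "xs = []")
  case True then show ?thesis by simp
next
  case False
  define L where "L = length xs"
  have L0: "0 < L" using False by (simp add: L_def)
  define m where "m = k mod L"
  have mL: "m < L" using L0 by (simp add: m_def)
  have rk: "rotate k xs = rotate m xs" by (simp add: rotate_conv_mod[of k] m_def L_def)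
  have "rotate (L - m) (rev xs) = rev (rotate (L - (L - m) mod L) xs)"
    by (simp add: rotate_rev L_def)
  also have "rotate (L - (L - m) mod L) xs = rotate m xs"
  proof (cases "m = 0")
    case True then show ?thesis by (simp add: L_def)
  next
    case False
    then have "(L - m) mod L = L - m" using mL by simp
    then show ?thesis using mL by simp
  qed
  finally show ?thesis using rk by metis
qed

lemma rot_back: "\<exists>j. rotate j (rotate k xs) = xs"
proof (cases "xs = []")
  case True then show ?thesis by simp
next
  case False
  define L where "L = length xs"
  have L0: "0 < L" using False by (simp add: L_def)
  have "rotate (L - k mod L) (rotate k xs) = rotate (L - k mod L + k) xs" by (simp add: rotate_rotate)
  also have "\<dots> = xs"
  proof (rule rotate_id)
    have "(L - k mod L + k) mod L = (L - k mod L + k mod L) mod L" by (simp add: mod_add_right_eq)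
    also have "L - k mod L + k mod L = L" using L0 by (simp add: less_imp_le)
    finally show "(L - k mod L + k) mod length xs = 0" by (simp add: L_def)
  qed
  finally show ?thesis by blast
qed

definition orb :: "vert list \<Rightarrow> vert list set" where
  "orb l = range (\<lambda>k. rotate k l) \<union> range (\<lambda>k. rotate k (rev l))"

lemma orb_self: "l \<in> orb l"
  unfolding orb_def by (metis UnI1 rangeI rotate0 id_apply)

lemma orb_closed: assumes "u \<in> orb l" shows "orb u \<subseteq> orb l"
proof -
  have R1: "rotate j (rotate k l) \<in> orb l" for j k by (simp add: orb_def rotate_rotate)
  have R2: "rotate j (rotate k (rev l)) \<in> orb l" for j k by (simp add: orb_def rotate_rotate)
  show ?thesis
  proof
    fix v assume v: "v \<in> orb u"
    then obtain j where vj: "v = rotate j u \<or> v = rotate j (rev u)" by (auto simp: orb_def)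
    from assms obtain k where "u = rotate k l \<or> u = rotate k (rev l)" by (auto simp: orb_def)
    then show "v \<in> orb l"
    proof
      assume u: "u = rotate k l"
      obtain k' where k': "rev (rotate k l) = rotate k' (rev l)" using rev_rot by blast
      from vj show ?thesis unfolding u k' using R1 R2 by blast
    next
      assume u: "u = rotate k (rev l)"
      obtain k' where k': "rev (rotate k (rev l)) = rotate k' l"
        using rev_rot[of k "rev l"] by auto
      from vj show ?thesis unfolding u k' using R1 R2 by blast
    qed
  qed
qed

lemma orb_sym: assumes "u \<in> orb l" shows "l \<in> orb u"
proof -
  from assms obtain k where "u = rotate k l \<or> u = rotate k (rev l)" by (auto simp: orb_def)
  then show ?thesis
  proof
    assume u: "u = rotate k l"
    obtain j where "rotate j (rotate k l) = l" using rot_back by blast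
    then show ?thesis unfolding u orb_def by (metis UnI1 rangeI)
  next
    assume u: "u = rotate k (rev l)"
    obtain k' where k': "rev u = rotate k' l"
      using rev_rot[of k "rev l"] u by auto
    obtain j where "rotate j (rotate k' l) = l" using rot_back by blast
    then have "rotate j (rev u) = l" using k' by simp
    then show ?thesis unfolding orb_def by (metis UnI2 rangeI)
  qed
qed

lemma orb_props:
  assumes cp: "closed_path a b c d l" and u: "u \<in> orb l"
  shows "closed_path a b c d u" "length u = length l" "gw x u = gw x l"
proof -
  from u obtain k where "u = rotate k l \<or> u = rotate k (rev l)" by (auto simp: orb_def)
  then show "closed_path a b c d u" "length u = length l" "gw x u = gw x l"
    using rotate_inv[OF cp] rev_inv[OF cp] rotate_inv[OF rev_inv(1)[OF cp]] by (auto simp: rev_inv(2)[OF cp])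
qed


lemma vless_irrefl: "\<forall>p. (p, p) \<notin> vless" by (simp add: vless_def)
lemma vless_trans: "trans vless" by (auto simp: trans_def vless_def)
lemma vless_total: "\<forall>p q. (p, q) \<in> vless \<or> p = q \<or> (q, p) \<in> vless"
  by (auto simp: vless_def prod_eq_iff)

lemma lex_irrefl: "(u, u) \<notin> lexord vless" by (rule lexord_irreflexive[OF vless_irrefl])
lemma lex_trans: "(u, v) \<in> lexord vless \<Longrightarrow> (v, w) \<in> lexord vless \<Longrightarrow> (u, w) \<in> lexord vless"
  using lexord_trans vless_trans by blast
lemma lex_total: "(u, v) \<in> lexord vless \<or> u = v \<or> (v, u) \<in> lexord vless"
  by (rule lexord_linear[OF vless_total])

lemma lex_min: "finite A \<Longrightarrow> A \<noteq> {} \<Longrightarrow> \<exists>m\<in>A. \<forall>y\<in>A. m = y \<or> (m, y) \<in> lexord vless"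
proof (induction A rule: finite_ne_induct)
  case (singleton x) then show ?case by simp
next
  case (insert x F)
  then obtain m where m: "m \<in> F" "\<forall>y\<in>F. m = y \<or> (m, y) \<in> lexord vless" by blast
  show ?case
  proof (cases "(x, m) \<in> lexord vless")
    case True
    have "\<forall>y\<in>insert x F. x = y \<or> (x, y) \<in> lexord vless"
    proof
      fix y assume "y \<in> insert x F"
      then show "x = y \<or> (x, y) \<in> lexord vless"
      proof
        assume "y \<in> F"
        then have "m = y \<or> (m, y) \<in> lexord vless" using m by blast
        then show ?thesis using True lex_trans[of x m y] by auto
      qed simp
    qed
    then show ?thesis by blast
  next
    case False
    then have "m = x \<or> (m, x) \<in> lexord vless" using lex_total[of x m] by blast
    then have "\<forall>y\<in>insert x F. m = y \<or> (m, y) \<in> lexord vless" using m(2) by blast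
    then show ?thesis using m(1) by blast
  qed
qed

lemma is_loop_iff:
  assumes cp: "closed_path a b c d l"
  shows "is_loop a b c d l \<longleftrightarrow> (\<forall>u\<in>orb l. l = u \<or> (l, u) \<in> lexord vless)"
proof
  assume L: "is_loop a b c d l"
  have all: "\<forall>k<length l. \<forall>ws\<in>{rotate k l, rotate k (rev l)}. l = ws \<or> (l, ws) \<in> lexord vless"
    using L unfolding is_loop_def by blast
  have n0: "0 < length l" using closed_path_len[OF cp] .
  show "\<forall>u\<in>orb l. l = u \<or> (l, u) \<in> lexord vless"
  proof
    fix u assume "u \<in> orb l"
    then obtain k where k: "u = rotate k l \<or> u = rotate k (rev l)" unfolding orb_def by blast
    have e1: "rotate k l = rotate (k mod length l) l" by (rule rotate_conv_mod)
    have e2: "rotate k (rev l) = rotate (k mod length l) (rev l)"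
      by (rule rotate_conv_mod[of k "rev l", unfolded length_rev])
    have k': "k mod length l < length l" using n0 by simp
    have f: "l = rotate (k mod length l) l \<or> (l, rotate (k mod length l) l) \<in> lexord vless"
         "l = rotate (k mod length l) (rev l) \<or> (l, rotate (k mod length l) (rev l)) \<in> lexord vless"
      using all k' by blast+
    from k show "l = u \<or> (l, u) \<in> lexord vless"
    proof
      assume "u = rotate k l" then show ?thesis using f(1) e1 by simp
    next
      assume "u = rotate k (rev l)" then show ?thesis using f(2) e2 by simp
    qed
  qed
next
  assume R: "\<forall>u\<in>orb l. l = u \<or> (l, u) \<in> lexord vless"
  have "\<forall>k<length l. \<forall>ws\<in>{rotate k l, rotate k (rev l)}. l = ws \<or> (l, ws) \<in> lexord vless"
  proof (intro allI impI ballI)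
    fix k ws assume "ws \<in> {rotate k l, rotate k (rev l)}"
    then have "ws \<in> orb l" unfolding orb_def by blast
    then show "l = ws \<or> (l, ws) \<in> lexord vless" using R by blast
  qed
  then show "is_loop a b c d l" using cp unfolding is_loop_def by blast
qed

lemma loops_sub: "loops a b c d r \<subseteq> CP a b c d r"
  unfolding loops_def CP_def is_loop_def by blast

lemma orb_sub_CP: "l \<in> CP a b c d r \<Longrightarrow> orb l \<subseteq> CP a b c d r"
proof
  fix u assume l: "l \<in> CP a b c d r" and u: "u \<in> orb l"
  have "closed_path a b c d l" "length l = r" using l by (auto simp: CP_def)
  then show "u \<in> CP a b c d r" using orb_props(1,2)[OF _ u] by (simp add: CP_def)
qed

lemma loop_exists:
  assumes vs: "vs \<in> CP a b c d r"
  shows "\<exists>l\<in>loops a b c d r. vs \<in> orb l"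
proof -
  have fin: "finite (orb vs)" by (rule finite_subset[OF orb_sub_CP[OF vs] finite_CP])
  obtain m where m: "m \<in> orb vs" "\<forall>y\<in>orb vs. m = y \<or> (m, y) \<in> lexord vless"
    using lex_min[OF fin] orb_self by blast
  have cpv: "closed_path a b c d vs" "length vs = r" using vs by (auto simp: CP_def)
  have cpm: "closed_path a b c d m" "length m = r" using orb_props[OF cpv(1) m(1)] cpv by auto
  have "is_loop a b c d m"
    unfolding is_loop_iff[OF cpm(1)] using m orb_closed[OF m(1)] by blast
  then have "m \<in> loops a b c d r" using cpm by (simp add: loops_def)
  moreover have "vs \<in> orb m" by (rule orb_sym[OF m(1)])
  ultimately show ?thesis by blast
qed

lemma loop_unique:
  assumes l1: "l1 \<in> loops a b c d r" and l2: "l2 \<in> loops a b c d r"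
    and v1: "vs \<in> orb l1" and v2: "vs \<in> orb l2"
  shows "l1 = l2"
proof -
  have c1: "closed_path a b c d l1" "is_loop a b c d l1" using l1 by (auto simp: loops_def is_loop_def)
  have c2: "closed_path a b c d l2" "is_loop a b c d l2" using l2 by (auto simp: loops_def is_loop_def)
  have "l2 \<in> orb l1" using orb_closed[OF v1] orb_sym[OF v2] by blast
  then have A: "l1 = l2 \<or> (l1, l2) \<in> lexord vless" using c1 is_loop_iff by blast
  have "l1 \<in> orb l2" using orb_closed[OF v2] orb_sym[OF v1] by blast
  then have B: "l2 = l1 \<or> (l2, l1) \<in> lexord vless" using c2 is_loop_iff by blast
  show ?thesis using A B lex_trans lex_irrefl by blast
qed

lemma CP_union: "CP a b c d r = \<Union> (orb ` loops a b c d r)"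
proof
  show "CP a b c d r \<subseteq> \<Union> (orb ` loops a b c d r)" using loop_exists by blast
  show "\<Union> (orb ` loops a b c d r) \<subseteq> CP a b c d r" using orb_sub_CP loops_sub by blast
qed

definition per :: "vert list \<Rightarrow> nat" where "per l = (LEAST p. 0 < p \<and> rotate p l = l)"

lemma rot_mult: "rotate p l = l \<Longrightarrow> rotate (q * p) l = l"
proof (induction q)
  case 0 then show ?case by simp
next
  case (Suc q)
  have "rotate (Suc q * p) l = rotate p (rotate (q * p) l)" by (simp add: rotate_rotate add.commute)
  then show ?case using Suc by simp
qed

lemma rot_mod: "rotate p l = l \<Longrightarrow> rotate k l = rotate (k mod p) l"
proof -
  assume p: "rotate p l = l"
  have "rotate k l = rotate (k mod p + (k div p) * p) l" by simp
  also have "\<dots> = rotate (k mod p) (rotate ((k div p) * p) l)" by (simp add: rotate_rotate)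
  also have "\<dots> = rotate (k mod p) l" using rot_mult[OF p] by simp
  finally show ?thesis .
qed

lemma per_props:
  assumes n0: "0 < length l"
  shows "0 < per l" "rotate (per l) l = l" "per l \<le> length l" "per l dvd length l"
proof -
  have ex: "0 < length l \<and> rotate (length l) l = l" using n0 by simp
  show p0: "0 < per l" and pr: "rotate (per l) l = l"
    unfolding per_def using LeastI[of "\<lambda>p. 0 < p \<and> rotate p l = l", OF ex] by auto
  show "per l \<le> length l" unfolding per_def by (rule Least_le[of "\<lambda>p. 0 < p \<and> rotate p l = l", OF ex])
  have "rotate (length l mod per l) l = l"
    using rot_mod[OF pr, of "length l"] by simp
  moreover have "\<not> (0 < length l mod per l \<and> rotate (length l mod per l) l = l)"
  proof -
    have "length l mod per l < per l" using p0 by simp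
    then show ?thesis unfolding per_def using not_less_Least by blast
  qed
  ultimately show "per l dvd length l" by (simp add: dvd_eq_mod_eq_0)
qed

lemma card_R1:
  assumes n0: "0 < length l"
  shows "card (range (\<lambda>k. rotate k l)) = per l"
proof -
  note P = per_props[OF n0]
  have eq: "range (\<lambda>k. rotate k l) = (\<lambda>k. rotate k l) ` {..<per l}"
  proof
    show "range (\<lambda>k. rotate k l) \<subseteq> (\<lambda>k. rotate k l) ` {..<per l}"
    proof
      fix u assume "u \<in> range (\<lambda>k. rotate k l)"
      then obtain k where "u = rotate k l" by blast
      then have "u = rotate (k mod per l) l" using rot_mod[OF P(2)] by simp
      moreover have "k mod per l < per l" using P(1) by simp
      ultimately show "u \<in> (\<lambda>k. rotate k l) ` {..<per l}" by blast
    qed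
  qed auto
  have inj: "inj_on (\<lambda>k. rotate k l) {..<per l}"
  proof -
    have *: "i = j" if ij: "i \<le> j" "j < per l" "rotate i l = rotate j l" for i j
    proof (rule ccontr)
      assume "i \<noteq> j"
      obtain t where t: "rotate t (rotate i l) = l" using rot_back by blast
      have "rotate t (rotate j l) = rotate (j - i) (rotate t (rotate i l))"
        using ij(1) by (simp add: rotate_rotate add.commute add.left_commute)
      then have "rotate (j - i) l = l" using t ij(3) by simp
      moreover have "0 < j - i" "j - i < per l" using ij \<open>i \<noteq> j\<close> by auto
      ultimately show False unfolding per_def using not_less_Least by blast
    qed
    show ?thesis by (rule inj_onI) (metis lessThan_iff nat_le_linear *)
  qed
  show ?thesis unfolding eq using card_image[OF inj] by simp
qed

lemma card_orb:
  assumes cp: "closed_path a b c d l"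
  shows "card (orb l) = 2 * per l"
proof -
  have n0: "0 < length l" by (rule closed_path_len[OF cp])
  define R1 where "R1 = range (\<lambda>k. rotate k l)"
  define R2 where "R2 = range (\<lambda>k. rotate k (rev l))"
  have R2eq: "R2 = rev ` R1"
  proof
    show "R2 \<subseteq> rev ` R1"
      unfolding R1_def R2_def by (auto simp: rotate_rev)
    show "rev ` R1 \<subseteq> R2"
      unfolding R1_def R2_def using rev_rot by blast
  qed
  have finR1: "finite R1"
    using card_R1[OF n0] per_props(1)[OF n0] card_ge_0_finite unfolding R1_def by metis
  have cR2: "card R2 = card R1" unfolding R2eq by (rule card_image) (simp add: inj_on_def)
  have disj: "R1 \<inter> R2 = {}"
  proof (rule ccontr)
    assume "R1 \<inter> R2 \<noteq> {}"
    then obtain i j where e: "rotate i l = rotate j (rev l)" unfolding R1_def R2_def by blast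
    define w where "w = rotate (length l - j mod length l) l"
    have rw: "rotate j (rev l) = rev w" by (simp add: rotate_rev w_def)
    obtain t where t: "rotate t w = l" unfolding w_def using rot_back by blast
    have "rev w = rotate i (rotate t w)" using e rw t by simp
    also have "\<dots> = rotate (i + t) w" by (simp add: rotate_rotate)
    finally have "rev w = rotate (i + t) w" .
    moreover have "closed_path a b c d w" unfolding w_def by (rule rotate_inv(1)[OF cp])
    ultimately show False using no_refl by blast
  qed
  have "card (orb l) = card (R1 \<union> R2)" by (simp add: orb_def R1_def R2_def)
  also have "\<dots> = card R1 + card R2"
    by (rule card_Un_disjoint) (use finR1 cR2 R2eq disj in auto)
  also have "\<dots> = 2 * per l" using cR2 card_R1[OF n0] by (simp add: R1_def)
  finally show ?thesis .
qed


lemma orb_disj: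
  assumes "l1 \<in> loops a b c d r" "l2 \<in> loops a b c d r" "l1 \<noteq> l2"
  shows "orb l1 \<inter> orb l2 = {}"
  using loop_unique[OF assms(1,2)] assms(3) by blast

lemma finite_loops: "finite (loops a b c d r)"
  using finite_subset[OF loops_sub finite_CP] .

lemma loop_cp: "l \<in> loops a b c d r \<Longrightarrow> closed_path a b c d l \<and> length l = r"
  by (auto simp: loops_def is_loop_def)

lemma sum_CP:
  "(\<Sum>vs\<in>CP a b c d r. gw x vs) = (\<Sum>l\<in>loops a b c d r. of_nat (card (orb l)) * gw x l)"
proof -
  have "(\<Sum>vs\<in>CP a b c d r. gw x vs) = (\<Sum>l\<in>loops a b c d r. \<Sum>vs\<in>orb l. gw x vs)"
    unfolding CP_union
  proof (rule sum.UNION_disjoint)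
    show "finite (loops a b c d r)" by (rule finite_loops)
    show "\<forall>l\<in>loops a b c d r. finite (orb l)"
    proof
      fix l assume "l \<in> loops a b c d r"
      then have "l \<in> CP a b c d r" using loops_sub by blast
      then show "finite (orb l)" using finite_subset[OF orb_sub_CP finite_CP] by blast
    qed
    show "\<forall>l1\<in>loops a b c d r. \<forall>l2\<in>loops a b c d r. l1 \<noteq> l2 \<longrightarrow> orb l1 \<inter> orb l2 = {}"
      using orb_disj by blast
  qed
  also have "\<dots> = (\<Sum>l\<in>loops a b c d r. of_nat (card (orb l)) * gw x l)"
  proof (rule sum.cong)
    fix l assume l: "l \<in> loops a b c d r"
    have "(\<Sum>vs\<in>orb l. gw x vs) = (\<Sum>vs\<in>orb l. gw x l)"
      by (rule sum.cong) (use orb_props(3) loop_cp[OF l] in auto)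
    then show "(\<Sum>vs\<in>orb l. gw x vs) = of_nat (card (orb l)) * gw x l" by simp
  qed simp
  finally show ?thesis .
qed

lemma weight_eq:
  assumes l: "l \<in> loops a b c d r"
  shows "of_nat (card (orb l)) * gw x l = 2 * of_nat r * lweight l x"
proof -
  have cp: "closed_path a b c d l" and len: "length l = r" using loop_cp[OF l] by auto
  have n0: "0 < length l" by (rule closed_path_len[OF cp])
  note P = per_props[OF n0]
  define q where "q = length l div per l"
  have rq: "length l = per l * q" using P(4) by (simp add: q_def)
  have q0: "q \<noteq> 0" using rq n0 by auto
  have m: "mult l = q" by (simp add: mult_def q_def per_def)
  have lw: "lweight l x = lsgn l / of_nat q * xprod x l" by (simp add: lweight_def m xprod_def)
  have qlw: "of_nat q * lweight l x = lsgn l * xprod x l" using q0 unfolding lw by simp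
  have rr: "(of_nat r :: complex) = of_nat (per l) * of_nat q" using len rq by (metis of_nat_mult)
  have "2 * of_nat r * lweight l x = 2 * of_nat (per l) * (of_nat q * lweight l x)"
    unfolding rr by (simp add: mult_ac)
  also have "\<dots> = of_nat (card (orb l)) * gw x l"
    unfolding qlw card_orb[OF cp] by (simp add: gw_def)
  finally show ?thesis by simp
qed

lemma fr_identity:
  "(\<Sum>vs\<in>CP a b c d r. gw x vs) = 2 * of_nat r * f_r a b c d r x"
  unfolding sum_CP f_r_def sum_distrib_left by (rule sum.cong) (simp_all add: weight_eq)

lemma card_D: "card (rectD a b c d) \<le> 4 * card (rectV a b c d)"
proof -
  have "rectD a b c d \<subseteq> (\<lambda>(w, k). (w, addv w (dirv k))) ` (rectV a b c d \<times> {..<4})"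
  proof
    fix e assume e: "e \<in> rectD a b c d"
    obtain u w where uw: "e = (u, w)" by (cases e)
    have r: "radj a b c d u w" using e uw by (simp add: rectD_def)
    have "w = addv u (dirv (dirof (vdiff w u)))" by (rule radj_addv[OF r])
    moreover have "u \<in> rectV a b c d" using r by (simp add: radj_def)
    ultimately show "e \<in> (\<lambda>(w, k). (w, addv w (dirv k))) ` (rectV a b c d \<times> {..<4})"
      using uw dirof_lt[of "vdiff w u"] by (auto intro!: image_eqI[of _ _ "(u, dirof (vdiff w u))"])
  qed
  then have "card (rectD a b c d) \<le> card ((\<lambda>(w, k). (w, addv w (dirv k))) ` (rectV a b c d \<times> {..<4::nat}))"
    by (rule card_mono[rotated]) (simp add: finite_rectV)
  also have "\<dots> \<le> card (rectV a b c d \<times> {..<4::nat})" by (rule card_image_le) (simp add: finite_rectV)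
  also have "\<dots> = 4 * card (rectV a b c d)" by (simp add: card_cartesian_product)
  finally show ?thesis .
qed

lemma CP_1: "CP a b c d 1 = {}"
proof -
  have "\<not> closed_path a b c d vs" if "length vs = 1" for vs
  proof
    assume cp: "closed_path a b c d vs"
    have "radj a b c d (vs ! 0) (vs ! ((0 + 1) mod length vs))" using closed_pathD(1)[OF cp] that by simp
    then have "radj a b c d (vs ! 0) (vs ! 0)" using that by simp
    then show False using radj_ne by blast
  qed
  then show ?thesis by (auto simp: CP_def)
qed

lemma opnorm_bound:
  "opnorm (Lam a b c d x) (rectD a b c d) \<le> (sqrt 2 + 1) * supnorm (rectE a b c d) x"
proof -
  define S where "S = {L2_set (\<lambda>e. cmod (\<Sum>f\<in>rectD a b c d. Lam a b c d x e f * v f)) (rectD a b c d) | v.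
        L2_set (\<lambda>e. cmod (v e)) (rectD a b c d) \<le> 1}"
  have "L2_set (\<lambda>e. cmod (\<Sum>f\<in>rectD a b c d. Lam a b c d x e f * (\<lambda>_. 0::complex) f)) (rectD a b c d) \<in> S"
    unfolding S_def by (rule CollectI, rule exI[of _ "\<lambda>_. 0"]) (simp add: L2_set_def)
  then have ne: "S \<noteq> {}" by (metis empty_iff)
  have ub: "y \<le> (sqrt 2 + 1) * supnorm (rectE a b c d) x" if yS: "y \<in> S" for y
  proof -
    obtain v where y0: "y = L2_set (\<lambda>e. cmod (\<Sum>f\<in>rectD a b c d. Lam a b c d x e f * v f)) (rectD a b c d)"
      and v: "L2_set (\<lambda>e. cmod (v e)) (rectD a b c d) \<le> 1" using yS unfolding S_def by blast
    have y: "y = L2_set (\<lambda>e. cmod (appL a b c d x v e)) (rectD a b c d)"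
      unfolding y0 appL_def ..
    have s0: "0 \<le> (1 + sqrt 2) * supnorm (rectE a b c d) x" by (simp add: supnorm_nonneg finite_rectE)
    have "y \<le> (1 + sqrt 2) * supnorm (rectE a b c d) x * L2_set (\<lambda>e. cmod (v e)) (rectD a b c d)"
      unfolding y by (rule app_norm)
    also have "\<dots> \<le> (1 + sqrt 2) * supnorm (rectE a b c d) x * 1" by (rule mult_left_mono[OF v s0])
    finally show ?thesis by (simp add: add.commute)
  qed
  have "Sup S \<le> (sqrt 2 + 1) * supnorm (rectE a b c d) x" by (rule cSup_least[OF ne ub])
  then show ?thesis unfolding opnorm_def S_def .
qed


lemma fr_bound:
  assumes r1: "1 \<le> r"
  shows "cmod (f_r a b c d r x) \<le> 2 * real (card (rectV a b c d)) / real r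
             * (sqrt 2 + 1) ^ r * supnorm (rectE a b c d) x ^ r"
proof -
  define s where "s = supnorm (rectE a b c d) x"
  define K where "K = (1 + sqrt 2) * s"
  have s0: "0 \<le> s" by (simp add: s_def supnorm_nonneg finite_rectE)
  have K0: "0 \<le> K" using s0 by (simp add: K_def)
  have id: "2 * of_nat r * f_r a b c d r x = (\<Sum>vs\<in>CP a b c d r. gw x vs)"
    by (rule fr_identity[symmetric])
  have rhs0: "0 \<le> 2 * real (card (rectV a b c d)) / real r * (sqrt 2 + 1) ^ r * s ^ r"
    using s0 by simp
  show ?thesis
  proof (cases "r = 1")
    case True
    then have "f_r a b c d r x = 0" using id CP_1 by simp
    then show ?thesis using rhs0 by (simp add: s_def)
  next
    case False
    then have r2: "2 \<le> r" using r1 by simp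
    have "(\<Sum>vs\<in>CP a b c d r. gw x vs) = - (\<Sum>vs\<in>LS (rectV a b c d) r. tprod (Lam a b c d x) vs)"
      using tprod_sum[OF r1, of a b c d x] by (simp add: gw_def)
    also have "\<dots> = - (\<Sum>e0\<in>rectD a b c d. (appL a b c d x ^^ r) (deltaE e0) e0)"
      by (simp add: trace_id[OF r2])
    finally have e: "2 * of_nat r * f_r a b c d r x = - (\<Sum>e0\<in>rectD a b c d. (appL a b c d x ^^ r) (deltaE e0) e0)"
      using id by simp
    have "2 * real r * cmod (f_r a b c d r x) = cmod (2 * of_nat r * f_r a b c d r x)"
      by (simp add: norm_mult)
    also have "\<dots> = cmod (\<Sum>e0\<in>rectD a b c d. (appL a b c d x ^^ r) (deltaE e0) e0)"
      unfolding e by simp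
    also have "\<dots> \<le> (\<Sum>e0\<in>rectD a b c d. cmod ((appL a b c d x ^^ r) (deltaE e0) e0))"
      by (rule norm_sum)
    also have "\<dots> \<le> (\<Sum>e0\<in>rectD a b c d. K ^ r)"
      by (rule sum_mono) (simp add: diag_bound K_def s_def)
    also have "\<dots> = real (card (rectD a b c d)) * K ^ r" by simp
    also have "\<dots> \<le> real (4 * card (rectV a b c d)) * K ^ r"
      by (rule mult_right_mono) (use card_D[of a b c d] K0 in simp_all)
    finally have "2 * real r * cmod (f_r a b c d r x) \<le> 4 * real (card (rectV a b c d)) * K ^ r" by simp
    then have "cmod (f_r a b c d r x) \<le> 4 * real (card (rectV a b c d)) * K ^ r / (2 * real r)"
      using r1 by (simp add: field_simps)
    also have "\<dots> = 2 * real (card (rectV a b c d)) / real r * (sqrt 2 + 1) ^ r * s ^ r"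
      by (simp add: K_def power_mult_distrib add.commute)
    finally show ?thesis by (simp add: s_def)
  qed
qed

theorem mainTheorem4:
  fixes a b c d :: int and x :: "vert set \<Rightarrow> complex"
  assumes "a \<le> b" and "c \<le> d"
  shows "opnorm (Lam a b c d x) (rectD a b c d) \<le> (sqrt 2 + 1) * supnorm (rectE a b c d) x
    \<and> (\<forall>r::nat. r \<ge> 1 \<longrightarrow>
         cmod (f_r a b c d r x) \<le> 2 * real (card (rectV a b c d)) / real r
             * (sqrt 2 + 1) ^ r * supnorm (rectE a b c d) x ^ r)"
  using opnorm_bound fr_bound by blast


end
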